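(* For all $\lambda,\mu\in\mathbb{C}$ the following are decompositions into direct sums of $\mathcal{K}$-submodules: (1) $\mathcal{D}_{\lambda,1/2}=\mathcal{D}^0_{\lambda,1/2}\oplus\{\bar d\circ T:T\in\mathcal{D}_{\lambda,0}\}$; (2) $\Psi^{-1/2,1}_{\lambda,0}=\Psi^{-1,0}_{\lambda,0}\oplus\{T\in\Psi^{-1/2,1}_{\lambda,0}:\bar d\circ T\in\mathcal{D}^0_{\lambda,1/2}\}$; (3) $\mathcal{D}_{0,\mu}=\mathcal{D}^0_{0,\mu}\oplus\{T\circ\bar d:T\in\mathcal{D}_{1/2,\mu}\}$; (4) $\Psi^{-1/2,1}_{1/2,\mu}=\Psi^{-1,0}_{1/2,\mu}\oplus\{T\in\Psi^{-1/2,1}_{1/2,\mu}:T\circ\bar d\in\mathcal{D}^0_{0,\mu}\}$; (5) $\mathcal{D}_{0,1/2}=\mathcal{D}^{1/2}_{0,1/2}\oplus\{\bar d\circ T\circ\bar d:T\in\mathcal{D}_{1/2,0}\}$; (6) $\Psi^{-1/2,1}_{1/2,0}=\Psi^{-3/2,1}_{1/2,0}\oplus\{T\in\Psi^{-1/2,1}_{1/2,0}:\bar d\circ T\circ\bar d\in\mathcal{D}^{1/2}_{0,1/2}\}$.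
   Context: Work over $\mathbb{C}$ on the superline $\mathbb{R}^{1|1}$ in the polynomial category. Let $\mathbb{C}[x,\xi]$ be the polynomial superalgebra with even coordinate $x$ and odd coordinate $\xi$ ($\xi^2=0$), $D=\partial_\xi+\xi\partial_x$, $\bar D=\partial_\xi-\xi\partial_x$. For $F\in\mathbb{C}[x,\xi]$ put $X_F=F\partial_x+\tfrac12 D(F)\bar D$; $\mathcal{K}=\{X_F\}$ is the Lie superalgebra of contact vector fields. For $\nu\in\mathbb{C}$, $\mathcal{F}_\nu=\alpha^\nu\mathbb{C}[x,\xi]$ ($\alpha^\nu$ formal, even) with action $L_\nu(X_F)(\alpha^\nu G)=\alpha^\nu(X_F(G)+\nu\,\partial_x(F)\,G)$. For $\lambda,\mu$ put $\delta=\mu-\lambda$. For $z\in\mathbb{C}$ let $\bar D^z_0=e^{i\pi z/2}\partial_x^{z/2}$ (even), $\bar D^z_1=e^{i\pi(z-1)/2}\partial_x^{(z-1)/2}\bar D$ (odd); for $j\in\mathbb{N}$, $\bar D^j_{j\bmod 2}=\bar D^j$. For $k\in\mathbb{C}$, $p\in\mathbb{Z}_2$, $\Psi^{k,p}_{\lambda,\mu}=\{\alpha^{\delta}\sum_{j\in\mathbb{N}}T_{2k-j}\bar D^{2k-j}_{p+(j\bmod 2)}:T_{2k-j}\in\mathbb{C}[x,\xi]\}$ (formal series), with composition $\Psi_{\mu,\nu}\times\Psi_{\lambda,\mu}\to\Psi_{\lambda,\nu}$ defined by $\bar D^{z'}_{p'}\circ\bar D^z_p=\bar D^{z+z'}_{p+p'}$,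 $[\bar D,\partial_x^z]=0$, $\partial_x^z\circ F=\sum_{j}\binom{z}{j}\partial_x^j(F)\circ\partial_x^{z-j}$, and $\mathcal{K}$-action $L_{\lambda,\mu}(X)(T)=L_\mu(X)\circ T-(-1)^{|X||T|}T\circ L_\lambda(X)$. The space of differential operators $\mathcal{D}_{\lambda,\mu}$ consists of the finite sums $\alpha^\delta\sum_{j=0}^{N}T_j\bar D^j$ with $T_j\in\mathbb{C}[x,\xi]$, and for $k\in\tfrac12\mathbb{N}$, $\mathcal{D}^k_{\lambda,\mu}$ is the subspace of those with $T_j=0$ for $j>2k$. The first super Bol operator is $\bar d=\alpha^{1/2}\bar D:\mathcal{F}_0\to\mathcal{F}_{1/2}$, an element of $\Psi^{1/2,1}_{0,1/2}$. *)

theory Defs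
  imports Complex_Main "HOL-Computational_Algebra.Polynomial"
    "HOL-Library.Function_Algebras" "HOL-Library.Product_Plus"
begin

text \<open>A superfunction  g0(x) + xi * g1(x)  is represented by the pair (g0, g1).\<close>

type_synonym spoly = "complex poly \<times> complex poly"

definition sp_mult :: "spoly \<Rightarrow> spoly \<Rightarrow> spoly" where
  "sp_mult a b = (fst a * fst b, fst a * snd b + snd a * fst b)"

definition sp_scale :: "complex \<Rightarrow> spoly \<Rightarrow> spoly" where
  "sp_scale c a = (smult c (fst a), smult c (snd a))"

definition sp_dx :: "spoly \<Rightarrow> spoly" where
  "sp_dx a = (pderiv (fst a), pderiv (snd a))"

text \<open>D = partial_xi + xi partial_x\<close>
definition sp_D :: "spoly \<Rightarrow> spoly" where
  "sp_D a = (snd a, pderiv (fst a))"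

text \<open>Dbar = partial_xi - xi partial_x\<close>
definition sp_Dbar :: "spoly \<Rightarrow> spoly" where
  "sp_Dbar a = (snd a, - pderiv (fst a))"

text \<open>G  |->  (-1)^|G| G  (extended linearly)\<close>
definition sp_sigma :: "spoly \<Rightarrow> spoly" where
  "sp_sigma a = (fst a, - snd a)"

text \<open>a bound beyond which all x-derivatives of G vanish\<close>
definition sdeg :: "spoly \<Rightarrow> nat" where
  "sdeg a = Suc (max (degree (fst a)) (degree (snd a)))"

text \<open>A symbol  alpha^delta * sum T_(z,q) Dbar^z_q  is represented by its coefficient
  function: T z q is the coefficient (in C[x,xi]) of Dbar^z_q, where q = True means
  parity index 1 and q = False means 0.  The formal factor alpha^delta is not stored;
  it enters only through the weights lambda, mu of the K-action.\<close>

type_synonym symb = "complex \<Rightarrow> bool \<Rightarrow> spoly"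

definition sscale :: "complex \<Rightarrow> symb \<Rightarrow> symb" where
  "sscale c T = (\<lambda>z q. sp_scale c (T z q))"

definition lmult :: "spoly \<Rightarrow> symb \<Rightarrow> symb" where
  "lmult G T = (\<lambda>z q. sp_mult G (T z q))"

text \<open>Dbar o T, using  Dbar o G = Dbar(G) + (-1)^|G| G Dbar  and
  Dbar^1_1 o Dbar^z_q = Dbar^(z+1)_(q+1)\<close>
definition lcompD :: "symb \<Rightarrow> symb" where
  "lcompD T = (\<lambda>z q. sp_Dbar (T z q) + sp_sigma (T (z - 1) (\<not> q)))"

text \<open>T o Dbar, using  Dbar^z_q o Dbar^1_1 = Dbar^(z+1)_(q+1)\<close>
definition rcompD :: "symb \<Rightarrow> symb" where
  "rcompD T = (\<lambda>z q. T (z - 1) (\<not> q))"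

text \<open>T o G for a superfunction G, using
  Dbar^z_0 o G = sum_j (-1)^j (z/2 choose j) (partial_x^j G) Dbar^(z-2j)_0
  (which is  partial_x^w o G = sum_j (w choose j) partial_x^j(G) partial_x^(w-j)
   rewritten via Dbar^z_0 = e^(i pi z/2) partial_x^(z/2)), and
  Dbar^z_1 = Dbar^(z-1)_0 o Dbar, Dbar o G = Dbar(G) + (-1)^|G| G Dbar.\<close>
definition rcomp :: "symb \<Rightarrow> spoly \<Rightarrow> symb" where
  "rcomp T G = (\<lambda>w r.
     if \<not> r then
       (\<Sum>j\<le>sdeg G. sp_scale ((-1) ^ j * (((w + 2 * of_nat j) / 2) gchoose j))
          (sp_mult (T (w + 2 * of_nat j) False) ((sp_dx ^^ j) G)
           + sp_mult (T (w + 1 + 2 * of_nat j) True) ((sp_dx ^^ j) (sp_Dbar G))))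
     else
       (\<Sum>j\<le>sdeg G. sp_scale ((-1) ^ j * (((w + 2 * of_nat j - 1) / 2) gchoose j))
          (sp_mult (T (w + 2 * of_nat j) True) ((sp_dx ^^ j) (sp_sigma G)))))"

text \<open>even and odd parts of a symbol (parity of G Dbar^z_q is |G| + q)\<close>
definition sev :: "symb \<Rightarrow> symb" where
  "sev T = (\<lambda>z q. if q then (0, snd (T z q)) else (fst (T z q), 0))"

definition sod :: "symb \<Rightarrow> symb" where
  "sod T = T - sev T"

text \<open>L_nu(X_F) o T  with  L_nu(X_F) = F partial_x + 1/2 D(F) Dbar + nu F',
  and partial_x = - Dbar o Dbar\<close>
definition Lop :: "complex \<Rightarrow> spoly \<Rightarrow> symb \<Rightarrow> symb" where
  "Lop nu F T = (\<lambda>z q.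
      sp_mult F ((- lcompD (lcompD T)) z q)
    + sp_scale (1/2) (sp_mult (sp_D F) (lcompD T z q))
    + sp_scale nu (sp_mult (sp_dx F) (T z q)))"

definition Rop :: "complex \<Rightarrow> spoly \<Rightarrow> symb \<Rightarrow> symb" where
  "Rop nu F T =
      - rcompD (rcompD (rcomp T F))
    + sscale (1/2) (rcompD (rcomp T (sp_D F)))
    + sscale nu (rcomp T (sp_dx F))"

text \<open>L_{lambda,mu}(X_F)(T) = L_mu(X_F) o T - (-1)^(|X||T|) T o L_lambda(X_F),
  defined on homogeneous parts of F and T and extended linearly.\<close>
definition act :: "complex \<Rightarrow> complex \<Rightarrow> spoly \<Rightarrow> symb \<Rightarrow> symb" where
  "act lam mu F T =
     (let Fe = (fst F, 0); Fo = (0, snd F) in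
       (Lop mu Fe T - Rop lam Fe T)
     + (Lop mu Fo T - Rop lam Fo (sev T) + Rop lam Fo (sod T)))"

text \<open>Psi^{k,p}: formal series sum_j T_(2k-j) Dbar^(2k-j)_(p + j mod 2)\<close>
definition Psi :: "complex \<Rightarrow> bool \<Rightarrow> symb set" where
  "Psi k p = {T. \<forall>z q. T z q \<noteq> 0 \<longrightarrow>
                 (\<exists>j::nat. z = 2 * k - of_nat j \<and> q = (p \<noteq> odd j))}"

text \<open>differential operators: finite sums  sum_j T_j Dbar^j,  Dbar^j = Dbar^j_(j mod 2)\<close>
definition Dop :: "symb set" where
  "Dop = {T. (\<forall>z q. T z q \<noteq> 0 \<longrightarrow> (\<exists>j::nat. z = of_nat j \<and> q = odd j))
           \<and> finite {z. \<exists>q. T z q \<noteq> 0}}"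

text \<open>D^k (k in 1/2 N): differential operators of order at most 2k\<close>
definition Dop_le :: "real \<Rightarrow> symb set" where
  "Dop_le k = {T \<in> Dop. \<forall>z q. T z q \<noteq> 0 \<longrightarrow> Re z \<le> 2 * k}"

text \<open>composition with the first super Bol operator  dbar = alpha^(1/2) Dbar\<close>
definition dbar_left :: "symb \<Rightarrow> symb" where "dbar_left T = lcompD T"
definition dbar_right :: "symb \<Rightarrow> symb" where "dbar_right T = rcompD T"

definition Ksub :: "complex \<Rightarrow> complex \<Rightarrow> symb set \<Rightarrow> bool" where
  "Ksub lam mu S \<longleftrightarrow> 0 \<in> S \<and> (\<forall>a\<in>S. \<forall>b\<in>S. a + b \<in> S)
     \<and> (\<forall>c. \<forall>a\<in>S. sscale c a \<in> S) \<and> (\<forall>F. \<forall>a\<in>S. act lam mu F a \<in> S)"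

definition Kdirect :: "complex \<Rightarrow> complex \<Rightarrow> symb set \<Rightarrow> symb set \<Rightarrow> symb set \<Rightarrow> bool" where
  "Kdirect lam mu V A B \<longleftrightarrow> Ksub lam mu A \<and> Ksub lam mu B \<and> A \<inter> B = {0}
     \<and> V = {a + b | a b. a \<in> A \<and> b \<in> B}"

end

theory Submission
  imports Defs
begin


lemma fst_sp_mult[simp]: "fst (sp_mult a b) = fst a * fst b" by (simp add: sp_mult_def)
lemma snd_sp_mult[simp]: "snd (sp_mult a b) = fst a * snd b + snd a * fst b" by (simp add: sp_mult_def)
lemma fst_sp_Dbar[simp]: "fst (sp_Dbar a) = snd a" by (simp add: sp_Dbar_def)
lemma snd_sp_Dbar[simp]: "snd (sp_Dbar a) = - pderiv (fst a)" by (simp add: sp_Dbar_def)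
lemma fst_sp_D[simp]: "fst (sp_D a) = snd a" by (simp add: sp_D_def)
lemma snd_sp_D[simp]: "snd (sp_D a) = pderiv (fst a)" by (simp add: sp_D_def)
lemma fst_sp_sigma[simp]: "fst (sp_sigma a) = fst a" by (simp add: sp_sigma_def)
lemma snd_sp_sigma[simp]: "snd (sp_sigma a) = - snd a" by (simp add: sp_sigma_def)
lemma fst_sp_dx[simp]: "fst (sp_dx a) = pderiv (fst a)" by (simp add: sp_dx_def)
lemma snd_sp_dx[simp]: "snd (sp_dx a) = pderiv (snd a)" by (simp add: sp_dx_def)
lemma fst_sp_scale[simp]: "fst (sp_scale c a) = smult c (fst a)" by (simp add: sp_scale_def)
lemma snd_sp_scale[simp]: "snd (sp_scale c a) = smult c (snd a)" by (simp add: sp_scale_def)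

lemmas pd = pderiv_add pderiv_minus pderiv_diff pderiv_mult pderiv_smult

lemma sscale_apply[simp]: "sscale c T z q = sp_scale c (T z q)" by (simp add: sscale_def)
lemma lmult_apply[simp]: "lmult G T z q = sp_mult G (T z q)" by (simp add: lmult_def)
lemma lcompD_apply[simp]: "lcompD T z q = sp_Dbar (T z q) + sp_sigma (T (z - 1) (\<not> q))" by (simp add: lcompD_def)
lemma rcompD_apply[simp]: "rcompD T z q = T (z - 1) (\<not> q)" by (simp add: rcompD_def)

definition hh :: "complex poly" where "hh = [:1/2:]"
lemma smult_half: "smult (1/2) p = hh * p" by (simp add: hh_def)
lemma hh2: "hh + hh = 1" by (simp add: hh_def one_pCons)
lemma pderiv_hh[simp]: "pderiv hh = 0" by (simp add: hh_def pderiv_pCons)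

lemma Lop_lcompD_even:
  "Lop (1/2) (f,0) (lcompD T) = lcompD (Lop 0 (f,0) T)"
  unfolding Lop_def apply (intro ext) apply (simp add: prod_eq_iff pd smult_add_right smult_diff_right smult_half) apply (intro conjI) apply (algebra | (insert hh2, algebra))+ done

lemma Lop_lcompD_odd:
  "Lop (1/2) (0,f) (lcompD T) = - lcompD (Lop 0 (0,f) T)"
  unfolding Lop_def apply (intro ext) apply (simp add: prod_eq_iff pd smult_add_right smult_diff_right smult_half) apply (intro conjI) apply (algebra | (insert hh2, algebra))+ done

lemma sp_mult_add_left: "sp_mult (a + b) c = sp_mult a c + sp_mult b c" by (simp add: prod_eq_iff algebra_simps)
lemma sp_mult_add_right: "sp_mult c (a + b) = sp_mult c a + sp_mult c b" by (simp add: prod_eq_iff algebra_simps)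
lemma sp_mult_minus_left: "sp_mult (- a) c = - sp_mult a c" by (simp add: prod_eq_iff algebra_simps)
lemma sp_mult_minus_right: "sp_mult c (- a) = - sp_mult c a" by (simp add: prod_eq_iff algebra_simps)
lemma sp_mult_diff_left: "sp_mult (a - b) c = sp_mult a c - sp_mult b c" by (simp add: prod_eq_iff algebra_simps)
lemma sp_mult_diff_right: "sp_mult c (a - b) = sp_mult c a - sp_mult c b" by (simp add: prod_eq_iff algebra_simps)
lemma sp_mult_zero_left[simp]: "sp_mult 0 c = 0" by (simp add: prod_eq_iff)
lemma sp_mult_zero_right[simp]: "sp_mult c 0 = 0" by (simp add: prod_eq_iff)
lemma sp_mult_scale_left: "sp_mult (sp_scale k a) c = sp_scale k (sp_mult a c)" by (simp add: prod_eq_iff algebra_simps smult_add_right)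
lemma sp_mult_scale_right: "sp_mult c (sp_scale k a) = sp_scale k (sp_mult c a)" by (simp add: prod_eq_iff algebra_simps smult_add_right)
lemma sp_mult_comm: "sp_mult a b = sp_mult b a" by (simp add: prod_eq_iff algebra_simps)
lemma sp_mult_sum_left: "sp_mult (\<Sum>i\<in>A. f i) c = (\<Sum>i\<in>A. sp_mult (f i) c)"
  by (induct A rule: infinite_finite_induct) (simp_all add: sp_mult_add_left)
lemma sp_mult_sum_right: "sp_mult c (\<Sum>i\<in>A. f i) = (\<Sum>i\<in>A. sp_mult c (f i))"
  by (induct A rule: infinite_finite_induct) (simp_all add: sp_mult_add_right)

lemma sp_scale_add: "sp_scale k (a + b) = sp_scale k a + sp_scale k b" by (simp add: prod_eq_iff smult_add_right)
lemma sp_scale_diff: "sp_scale k (a - b) = sp_scale k a - sp_scale k b" by (simp add: prod_eq_iff smult_diff_right)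
lemma sp_scale_minus: "sp_scale k (- a) = - sp_scale k a" by (simp add: prod_eq_iff)
lemma sp_scale_zero[simp]: "sp_scale k 0 = 0" by (simp add: prod_eq_iff)
lemma sp_scale_zero_left[simp]: "sp_scale 0 a = 0" by (simp add: prod_eq_iff)
lemma sp_scale_one[simp]: "sp_scale 1 a = a" by (simp add: prod_eq_iff)
lemma sp_scale_add_left: "sp_scale (k + l) a = sp_scale k a + sp_scale l a" by (simp add: prod_eq_iff smult_add_left)
lemma sp_scale_diff_left: "sp_scale (k - l) a = sp_scale k a - sp_scale l a" by (simp add: prod_eq_iff smult_diff_left)
lemma sp_scale_minus_left: "sp_scale (- k) a = - sp_scale k a" by (simp add: prod_eq_iff)
lemma sp_scale_scale: "sp_scale k (sp_scale l a) = sp_scale (k * l) a" by (simp add: prod_eq_iff)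
lemma sp_scale_sum: "sp_scale k (\<Sum>i\<in>A. f i) = (\<Sum>i\<in>A. sp_scale k (f i))"
  by (induct A rule: infinite_finite_induct) (simp_all add: sp_scale_add)

lemma sp_Dbar_add: "sp_Dbar (a + b) = sp_Dbar a + sp_Dbar b" by (simp add: prod_eq_iff pd)
lemma sp_Dbar_minus: "sp_Dbar (- a) = - sp_Dbar a" by (simp add: prod_eq_iff pd)
lemma sp_Dbar_diff: "sp_Dbar (a - b) = sp_Dbar a - sp_Dbar b" by (simp add: prod_eq_iff pd)
lemma sp_Dbar_zero[simp]: "sp_Dbar 0 = 0" by (simp add: prod_eq_iff)
lemma sp_Dbar_scale: "sp_Dbar (sp_scale k a) = sp_scale k (sp_Dbar a)" by (simp add: prod_eq_iff pd)
lemma sp_Dbar_sum: "sp_Dbar (\<Sum>i\<in>A. f i) = (\<Sum>i\<in>A. sp_Dbar (f i))"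
  by (induct A rule: infinite_finite_induct) (simp_all add: sp_Dbar_add)
lemma sp_sigma_add: "sp_sigma (a + b) = sp_sigma a + sp_sigma b" by (simp add: prod_eq_iff)
lemma sp_sigma_minus: "sp_sigma (- a) = - sp_sigma a" by (simp add: prod_eq_iff)
lemma sp_sigma_diff: "sp_sigma (a - b) = sp_sigma a - sp_sigma b" by (simp add: prod_eq_iff)
lemma sp_sigma_zero[simp]: "sp_sigma 0 = 0" by (simp add: prod_eq_iff)
lemma sp_sigma_scale: "sp_sigma (sp_scale k a) = sp_scale k (sp_sigma a)" by (simp add: prod_eq_iff)
lemma sp_sigma_sum: "sp_sigma (\<Sum>i\<in>A. f i) = (\<Sum>i\<in>A. sp_sigma (f i))"
  by (induct A rule: infinite_finite_induct) (simp_all add: sp_sigma_add)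
lemma sp_sigma_sigma[simp]: "sp_sigma (sp_sigma a) = a" by (simp add: prod_eq_iff)
lemma sp_sigma_mult: "sp_sigma (sp_mult a b) = sp_mult (sp_sigma a) (sp_sigma b)" by (simp add: prod_eq_iff)
lemma sp_Dbar_mult: "sp_Dbar (sp_mult a b) = sp_mult (sp_Dbar a) b + sp_mult (sp_sigma a) (sp_Dbar b)"
  by (simp add: prod_eq_iff pd algebra_simps)
lemma sp_Dbar_sigma: "sp_Dbar (sp_sigma a) = - sp_sigma (sp_Dbar a)" by (simp add: prod_eq_iff)
lemma sp_Dbar_Dbar: "sp_Dbar (sp_Dbar a) = - sp_dx a" by (simp add: prod_eq_iff)
lemma sp_dx_add: "sp_dx (a + b) = sp_dx a + sp_dx b" by (simp add: prod_eq_iff pd)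
lemma sp_dx_minus: "sp_dx (- a) = - sp_dx a" by (simp add: prod_eq_iff pd)
lemma sp_dx_zero[simp]: "sp_dx 0 = 0" by (simp add: prod_eq_iff)
lemma sp_D_minus: "sp_D (- a) = - sp_D a" by (simp add: prod_eq_iff pd)

lemma dxp_add: "(sp_dx ^^ j) (a + b) = (sp_dx ^^ j) a + (sp_dx ^^ j) b" by (induct j) (simp_all add: sp_dx_add)
lemma dxp_minus: "(sp_dx ^^ j) (- a) = - (sp_dx ^^ j) a" by (induct j) (simp_all add: sp_dx_minus)
lemma dxp_zero[simp]: "(sp_dx ^^ j) 0 = 0" by (induct j) simp_all
lemma dxp_Dbar: "(sp_dx ^^ j) (sp_Dbar a) = sp_Dbar ((sp_dx ^^ j) a)"
  by (induct j) (simp_all, simp add: prod_eq_iff pd)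
lemma dxp_sigma: "(sp_dx ^^ j) (sp_sigma a) = sp_sigma ((sp_dx ^^ j) a)"
  by (induct j) (simp_all, simp add: prod_eq_iff pd)
lemma dxp_Suc: "(sp_dx ^^ j) (sp_dx a) = (sp_dx ^^ Suc j) a"
  by (simp add: funpow_Suc_right del: funpow.simps)
lemma dxp_components: "(sp_dx ^^ j) a = ((pderiv ^^ j) (fst a), (pderiv ^^ j) (snd a))"
  by (induct j) (simp_all add: sp_dx_def)

lemma pderivp_zero: "degree p < j \<Longrightarrow> (pderiv ^^ j) (p :: complex poly) = 0"
proof (induct j arbitrary: p)
  case 0 then show ?case by simp
next
  case (Suc j)
  have "(pderiv ^^ Suc j) p = (pderiv ^^ j) (pderiv p)" by (simp add: funpow_Suc_right del: funpow.simps)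
  also have "\<dots> = 0"
  proof (cases "degree p = 0")
    case True
    then have "pderiv p = 0" by (simp add: pderiv_eq_0_iff)
    then show ?thesis by (induct j) simp_all
  next
    case False
    then show ?thesis using Suc by (intro Suc.hyps) (simp add: degree_pderiv)
  qed
  finally show ?case .
qed

lemma dxp_vanish: "sdeg a \<le> j \<Longrightarrow> (sp_dx ^^ j) a = 0"
  unfolding dxp_components sdeg_def by (simp add: pderivp_zero prod_eq_iff)



lemma sev_apply: "sev T z q = (if q then (0, snd (T z q)) else (fst (T z q), 0))" by (simp add: sev_def)
lemma sod_apply: "sod T z q = (if q then (fst (T z q), 0) else (0, snd (T z q)))"
  by (simp add: sod_def sev_def prod_eq_iff)

lemma sev_lcompD: "sev (lcompD T) = lcompD (sod T)"
  by (intro ext) (simp add: sev_apply sod_apply prod_eq_iff pd)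
lemma sod_lcompD: "sod (lcompD T) = lcompD (sev T)"
  by (intro ext) (simp add: sev_apply sod_apply prod_eq_iff pd)
lemma sev_rcompD: "sev (rcompD T) = rcompD (sod T)"
  by (intro ext) (simp add: sev_apply sod_apply prod_eq_iff pd)
lemma sod_rcompD: "sod (rcompD T) = rcompD (sev T)"
  by (intro ext) (simp add: sev_apply sod_apply prod_eq_iff pd)

lemma lcompD_add: "lcompD (A + B) = lcompD A + lcompD B" by (intro ext) (simp add: prod_eq_iff pd)
lemma lcompD_minus: "lcompD (- A) = - lcompD A" by (intro ext) (simp add: prod_eq_iff pd)
lemma lcompD_diff: "lcompD (A - B) = lcompD A - lcompD B" by (intro ext) (simp add: prod_eq_iff pd)
lemma lcompD_zero[simp]: "lcompD 0 = 0" by (intro ext) (simp add: prod_eq_iff)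
lemma lcompD_sscale: "lcompD (sscale c A) = sscale c (lcompD A)" by (intro ext) (simp add: prod_eq_iff pd smult_add_right smult_diff_right)
lemma rcompD_add: "rcompD (A + B) = rcompD A + rcompD B" by (intro ext) simp
lemma rcompD_minus: "rcompD (- A) = - rcompD A" by (intro ext) simp
lemma rcompD_diff: "rcompD (A - B) = rcompD A - rcompD B" by (intro ext) simp
lemma rcompD_zero[simp]: "rcompD 0 = 0" by (intro ext) simp
lemma rcompD_sscale: "rcompD (sscale c A) = sscale c (rcompD A)" by (intro ext) simp
lemma lcompD_rcompD: "lcompD (rcompD T) = rcompD (lcompD T)" by (intro ext) simp
lemma Lop_rcompD: "Lop mu F (rcompD T) = rcompD (Lop mu F T)"
  unfolding Lop_def by (intro ext) simp
lemma sscale_add: "sscale c (A + B) = sscale c A + sscale c B" by (intro ext) (simp add: sp_scale_add)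
lemma sscale_minus: "sscale c (- A) = - sscale c A" by (intro ext) (simp add: sp_scale_minus)
lemma sscale_diff: "sscale c (A - B) = sscale c A - sscale c B" by (intro ext) (simp add: sp_scale_diff)
lemma sscale_zero[simp]: "sscale c 0 = 0" by (intro ext) simp
lemma sscale_zero_left[simp]: "sscale 0 A = 0" by (intro ext) simp

definition cF :: "complex \<Rightarrow> nat \<Rightarrow> complex" where
  "cF w j = (-1) ^ j * (((w + 2 * of_nat j) / 2) gchoose j)"
definition cT :: "complex \<Rightarrow> nat \<Rightarrow> complex" where
  "cT w j = (-1) ^ j * (((w + 2 * of_nat j - 1) / 2) gchoose j)"

lemma rcomp_F: "rcomp T G w False = (\<Sum>j\<le>sdeg G. sp_scale (cF w j)
   (sp_mult (T (w + 2 * of_nat j) False) ((sp_dx ^^ j) G)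
    + sp_mult (T (w + 1 + 2 * of_nat j) True) ((sp_dx ^^ j) (sp_Dbar G))))"
  by (simp add: rcomp_def cF_def)
lemma rcomp_T: "rcomp T G w True = (\<Sum>j\<le>sdeg G. sp_scale (cT w j)
   (sp_mult (T (w + 2 * of_nat j) True) ((sp_dx ^^ j) (sp_sigma G))))"
  by (simp add: rcomp_def cT_def)

lemma sum_extend:
  fixes M N :: nat
  assumes "M \<le> N" "\<And>j. M < j \<Longrightarrow> j \<le> N \<Longrightarrow> f j = 0"
  shows "(\<Sum>j\<le>N. f j) = (\<Sum>j\<le>M. f j)"
  proof (rule sum.mono_neutral_right)
  show "{..M} \<subseteq> {..N}" using assms(1) by auto
  show "\<forall>i\<in>{..N} - {..M}. f i = 0" using assms(2) by (simp add: not_le)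
qed simp

lemma rcomp_F_N: "sdeg G \<le> N \<Longrightarrow> rcomp T G w False = (\<Sum>j\<le>N. sp_scale (cF w j)
   (sp_mult (T (w + 2 * of_nat j) False) ((sp_dx ^^ j) G)
    + sp_mult (T (w + 1 + 2 * of_nat j) True) ((sp_dx ^^ j) (sp_Dbar G))))"
  unfolding rcomp_F by (rule sum_extend[symmetric]) (simp_all add: dxp_vanish dxp_Dbar)
lemma rcomp_T_N: "sdeg G \<le> N \<Longrightarrow> rcomp T G w True = (\<Sum>j\<le>N. sp_scale (cT w j)
   (sp_mult (T (w + 2 * of_nat j) True) ((sp_dx ^^ j) (sp_sigma G))))"
  unfolding rcomp_T by (rule sum_extend[symmetric]) (simp_all add: dxp_vanish dxp_sigma)

lemma shift_sum:
  fixes c d :: "nat \<Rightarrow> complex" and P :: "nat \<Rightarrow> spoly"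
  assumes "d 0 = c 0" "\<And>i. c (Suc i) = d (Suc i) - c i"
  shows "(\<Sum>j\<le>N. sp_scale (c j) (P j)) = (\<Sum>j\<le>N. sp_scale (d j) (P j))
           - (\<Sum>j\<le>N. sp_scale (c j) (P (Suc j))) + sp_scale (c N) (P (Suc N))"
proof (induct N)
  case 0 then show ?case using assms by simp
next
  case (Suc N)
  have "sp_scale (c (Suc N)) (P (Suc N)) = sp_scale (d (Suc N)) (P (Suc N)) - sp_scale (c N) (P (Suc N))"
    using assms(2)[of N] by (simp add: sp_scale_diff_left)
  then show ?case using Suc by (simp add: algebra_simps)
qed

lemma pascal: "cF w (Suc i) = cT (w - 1) (Suc i) - cF w i"
proof -
  let ?a = "(w + 2 * of_nat i) / 2"
  have e1: "(w + 2 * of_nat (Suc i)) / 2 = ?a + 1" by (simp add: field_simps)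
  have e2: "(w - 1 + 2 * of_nat (Suc i) - 1) / 2 = ?a" by (simp add: field_simps)
  show ?thesis unfolding cF_def cT_def e1 e2 gbinomial_Suc_Suc by (simp add: algebra_simps)
qed

lemma cF_cT: "cF (w - 1) j = cT w j"
  unfolding cF_def cT_def by (simp add: algebra_simps)



lemma lcompD_rcomp_F: "lcompD (rcomp T G) w False = rcomp (lcompD T) G w False"
proof -
  define N where "N = sdeg G"
  define P where "P j = sp_mult (sp_sigma (T (w + 2 * of_nat j - 1) True)) ((sp_dx ^^ j) G)" for j
  define Q where "Q j = sp_mult (sp_Dbar (T (w + 2 * of_nat j) False)) ((sp_dx ^^ j) G)
     + sp_mult (sp_sigma (T (w + 2 * of_nat j) False)) (sp_Dbar ((sp_dx ^^ j) G))
     + sp_mult (sp_Dbar (T (w + 1 + 2 * of_nat j) True)) (sp_Dbar ((sp_dx ^^ j) G))" for j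
  have i1: "w + 2 * of_nat (Suc j) - 1 = w + 1 + 2 * of_nat j" for j by (simp add: algebra_simps)
  have i2: "w - 1 + 2 * of_nat j = w + 2 * of_nat j - 1" for j by (simp add: algebra_simps)
  have i3: "w + 1 + 2 * of_nat j - 1 = w + 2 * of_nat j" for j by (simp add: algebra_simps)
  have PS: "P (Suc j) = sp_mult (sp_sigma (T (w + 1 + 2 * of_nat j) True)) (sp_dx ((sp_dx ^^ j) G))" for j
    unfolding P_def i1 by simp
  have A: "sp_Dbar (sp_scale (cF w j)
   (sp_mult (T (w + 2 * of_nat j) False) ((sp_dx ^^ j) G)
    + sp_mult (T (w + 1 + 2 * of_nat j) True) ((sp_dx ^^ j) (sp_Dbar G))))
    = sp_scale (cF w j) (Q j) - sp_scale (cF w j) (P (Suc j))" for j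
    unfolding Q_def PS dxp_Dbar
    by (simp add: sp_Dbar_scale sp_Dbar_add sp_Dbar_mult sp_Dbar_Dbar sp_mult_minus_right
        sp_scale_add sp_scale_diff sp_scale_minus algebra_simps)
  have B: "sp_sigma (sp_scale (cT (w - 1) j)
     (sp_mult (T (w - 1 + 2 * of_nat j) True) ((sp_dx ^^ j) (sp_sigma G))))
     = sp_scale (cT (w - 1) j) (P j)" for j
    unfolding P_def i2 dxp_sigma by (simp add: sp_sigma_scale sp_sigma_mult)
  have L: "lcompD (rcomp T G) w False = (\<Sum>j\<le>N. sp_scale (cF w j) (Q j))
      - (\<Sum>j\<le>N. sp_scale (cF w j) (P (Suc j))) + (\<Sum>j\<le>N. sp_scale (cT (w - 1) j) (P j))"
    unfolding lcompD_apply not_False_eq_True rcomp_F rcomp_T N_def[symmetric] sp_Dbar_sum sp_sigma_sum A B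
    by (simp add: sum_subtractf)
  have C: "sp_scale (cF w j)
   (sp_mult (lcompD T (w + 2 * of_nat j) False) ((sp_dx ^^ j) G)
    + sp_mult (lcompD T (w + 1 + 2 * of_nat j) True) ((sp_dx ^^ j) (sp_Dbar G)))
    = sp_scale (cF w j) (Q j) + sp_scale (cF w j) (P j)" for j
    unfolding Q_def P_def lcompD_apply dxp_Dbar i3
    by (simp add: sp_mult_add_left sp_scale_add algebra_simps)
  have R: "rcomp (lcompD T) G w False = (\<Sum>j\<le>N. sp_scale (cF w j) (Q j)) + (\<Sum>j\<le>N. sp_scale (cF w j) (P j))"
    unfolding rcomp_F N_def[symmetric] C by (simp add: sum.distrib)
  have PN: "P (Suc N) = 0" unfolding P_def N_def by (simp add: dxp_vanish)
  have S: "(\<Sum>j\<le>N. sp_scale (cF w j) (P j)) = (\<Sum>j\<le>N. sp_scale (cT (w - 1) j) (P j))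
           - (\<Sum>j\<le>N. sp_scale (cF w j) (P (Suc j))) + sp_scale (cF w N) (P (Suc N))"
    by (rule shift_sum) (simp add: cF_def cT_def, rule pascal)
  show ?thesis unfolding L R S PN by simp
qed

lemma lcompD_rcomp_T: "lcompD (rcomp T G) w True = rcomp (lcompD T) G w True"
proof -
  define N where "N = sdeg G"
  have i2: "w - 1 + 2 * of_nat j = w + 2 * of_nat j - 1" for j by (simp add: algebra_simps)
  have i4: "w - 1 + 1 + 2 * of_nat j = w + 2 * of_nat j" for j by (simp add: algebra_simps)
  have A: "sp_Dbar (sp_scale (cT w j) (sp_mult (T (w + 2 * of_nat j) True) ((sp_dx ^^ j) (sp_sigma G))))
     + sp_sigma (sp_scale (cF (w - 1) j)
         (sp_mult (T (w - 1 + 2 * of_nat j) False) ((sp_dx ^^ j) G)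
          + sp_mult (T (w - 1 + 1 + 2 * of_nat j) True) ((sp_dx ^^ j) (sp_Dbar G))))
     = sp_scale (cT w j) (sp_mult (lcompD T (w + 2 * of_nat j) True) ((sp_dx ^^ j) (sp_sigma G)))" for j
    unfolding cF_cT i2 i4 lcompD_apply dxp_Dbar dxp_sigma
    by (simp add: prod_eq_iff pd algebra_simps smult_add_right smult_diff_right)
  show ?thesis
    unfolding lcompD_apply not_True_eq_False rcomp_F rcomp_T N_def[symmetric] sp_Dbar_sum sp_sigma_sum
    by (simp only: sum.distrib[symmetric] A lcompD_apply not_True_eq_False)
qed

lemma lcompD_rcomp: "lcompD (rcomp T G) = rcomp (lcompD T) G"
proof (intro ext)
  fix w q show "lcompD (rcomp T G) w q = rcomp (lcompD T) G w q"
    by (cases q) (simp_all only: lcompD_rcomp_F lcompD_rcomp_T)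
qed



lemma sdeg_Dbar: "sdeg (sp_Dbar G) \<le> sdeg G"
  unfolding sdeg_def by (simp add: degree_pderiv)
lemma sdeg_sigma[simp]: "sdeg (sp_sigma G) = sdeg G"
  unfolding sdeg_def by simp
lemma sdeg_minus[simp]: "sdeg (- G) = sdeg G"
  unfolding sdeg_def by simp

lemma rcomp_rcompD_F: "rcomp (rcompD T) G w False = rcomp T (sp_Dbar G) w False + rcompD (rcomp T (sp_sigma G)) w False"
proof -
  define N where "N = sdeg G"
  define P where "P j = sp_mult (T (w + 2 * of_nat j - 1) True) ((sp_dx ^^ j) G)" for j
  define Q where "Q j = sp_mult (T (w + 2 * of_nat j) False) ((sp_dx ^^ j) (sp_Dbar G))" for j
  have i1: "w + 2 * of_nat (Suc j) - 1 = w + 1 + 2 * of_nat j" for j by (simp add: algebra_simps)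
  have i2: "w - 1 + 2 * of_nat j = w + 2 * of_nat j - 1" for j by (simp add: algebra_simps)
  have i3: "w + 1 + 2 * of_nat j - 1 = w + 2 * of_nat j" for j by (simp add: algebra_simps)
  have PS: "P (Suc j) = sp_mult (T (w + 1 + 2 * of_nat j) True) (sp_dx ((sp_dx ^^ j) G))" for j
    unfolding P_def i1 by simp
  have L: "rcomp (rcompD T) G w False = (\<Sum>j\<le>N. sp_scale (cF w j) (Q j)) + (\<Sum>j\<le>N. sp_scale (cF w j) (P j))"
    unfolding rcomp_F N_def[symmetric] rcompD_apply not_False_eq_True not_True_eq_False i3
    by (simp add: sum.distrib[symmetric] P_def Q_def sp_scale_add algebra_simps)
  have R1: "rcomp T (sp_Dbar G) w False = (\<Sum>j\<le>N. sp_scale (cF w j) (Q j)) - (\<Sum>j\<le>N. sp_scale (cF w j) (P (Suc j)))"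
    unfolding rcomp_F_N[OF order.trans[OF sdeg_Dbar N_def[symmetric, THEN eq_refl]]] PS
    by (simp add: sum_subtractf[symmetric] Q_def dxp_Dbar[symmetric] sp_Dbar_Dbar dxp_minus dxp_Suc
          sp_mult_minus_right sp_scale_add sp_scale_minus sp_scale_diff)
  have R2: "rcompD (rcomp T (sp_sigma G)) w False = (\<Sum>j\<le>N. sp_scale (cT (w - 1) j) (P j))"
    unfolding rcompD_apply not_False_eq_True rcomp_T sdeg_sigma N_def[symmetric]
    by (simp add: P_def i2)
  have PN: "P (Suc N) = 0" unfolding P_def N_def by (simp add: dxp_vanish)
  have S: "(\<Sum>j\<le>N. sp_scale (cF w j) (P j)) = (\<Sum>j\<le>N. sp_scale (cT (w - 1) j) (P j))
           - (\<Sum>j\<le>N. sp_scale (cF w j) (P (Suc j))) + sp_scale (cF w N) (P (Suc N))"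
    by (rule shift_sum) (simp add: cF_def cT_def, rule pascal)
  show ?thesis unfolding L R1 R2 S PN by simp
qed

lemma rcomp_rcompD_T: "rcomp (rcompD T) G w True = rcomp T (sp_Dbar G) w True + rcompD (rcomp T (sp_sigma G)) w True"
proof -
  define N where "N = sdeg G"
  have i2: "w - 1 + 2 * of_nat j = w + 2 * of_nat j - 1" for j by (simp add: algebra_simps)
  have i4: "w - 1 + 1 + 2 * of_nat j = w + 2 * of_nat j" for j by (simp add: algebra_simps)
  have A: "sp_scale (cT w j) (sp_mult (T (w + 2 * of_nat j - 1) False) ((sp_dx ^^ j) (sp_sigma G)))
     = sp_scale (cT w j) (sp_mult (T (w + 2 * of_nat j) True) ((sp_dx ^^ j) (sp_sigma (sp_Dbar G))))
     + sp_scale (cF (w - 1) j)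
         (sp_mult (T (w - 1 + 2 * of_nat j) False) ((sp_dx ^^ j) (sp_sigma G))
          + sp_mult (T (w - 1 + 1 + 2 * of_nat j) True) ((sp_dx ^^ j) (sp_Dbar (sp_sigma G))))" for j
    unfolding cF_cT i2 i4 sp_Dbar_sigma dxp_minus
    by (simp add: sp_mult_minus_right sp_scale_add sp_scale_minus sp_scale_diff)
  have R1: "rcomp T (sp_Dbar G) w True = (\<Sum>j\<le>N. sp_scale (cT w j)
   (sp_mult (T (w + 2 * of_nat j) True) ((sp_dx ^^ j) (sp_sigma (sp_Dbar G)))))"
    by (rule rcomp_T_N) (use sdeg_Dbar N_def in auto)
  show ?thesis
    unfolding R1 unfolding rcompD_apply not_False_eq_True not_True_eq_False rcomp_T
       rcomp_F sdeg_sigma N_def[symmetric]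
    by (simp only: sum.distrib[symmetric] A)
qed

lemma rcomp_rcompD: "rcomp (rcompD T) G = rcomp T (sp_Dbar G) + rcompD (rcomp T (sp_sigma G))"
proof (intro ext)
  fix w q show "rcomp (rcompD T) G w q = (rcomp T (sp_Dbar G) + rcompD (rcomp T (sp_sigma G))) w q"
    unfolding plus_fun_apply by (cases q) (simp_all only: rcomp_rcompD_F rcomp_rcompD_T)
qed



lemma rcomp_add: "rcomp (A + B) G = rcomp A G + rcomp B G"
proof (intro ext)
  fix w q show "rcomp (A + B) G w q = (rcomp A G + rcomp B G) w q"
    by (cases q) (simp_all add: rcomp_F rcomp_T sum.distrib[symmetric] sp_mult_add_left sp_scale_add algebra_simps)
qed
lemma rcomp_sscale: "rcomp (sscale c A) G = sscale c (rcomp A G)"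
proof (intro ext)
  fix w q show "rcomp (sscale c A) G w q = sscale c (rcomp A G) w q"
    by (cases q) (simp_all add: rcomp_F rcomp_T sp_scale_sum sp_mult_scale_left sp_scale_scale sp_scale_add mult.commute)
qed
lemma neg_sscale: "- A = sscale (-1) A" by (intro ext) (simp add: prod_eq_iff)
lemma rcomp_minus: "rcomp (- A) G = - rcomp A G"
  by (simp only: neg_sscale rcomp_sscale)
lemma rcomp_diff: "rcomp (A - B) G = rcomp A G - rcomp B G"
  by (metis diff_conv_add_uminus rcomp_add rcomp_minus)
lemma rcomp_zero[simp]: "rcomp 0 G = 0"
  using rcomp_sscale[of 0 0 G] by simp
lemma rcomp_negG: "rcomp T (- G) = - rcomp T G"
proof (intro ext)
  fix w q show "rcomp T (- G) w q = (- rcomp T G) w q"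
  proof (cases q)
    case True
    have "rcomp T (- G) w True = (\<Sum>j\<le>sdeg G. - sp_scale (cT w j)
      (sp_mult (T (w + 2 * of_nat j) True) ((sp_dx ^^ j) (sp_sigma G))))"
      unfolding rcomp_T sdeg_minus
      by (rule sum.cong) (simp_all add: dxp_minus sp_sigma_minus sp_mult_minus_right sp_scale_minus)
    then show ?thesis using True by (simp add: sum_negf rcomp_T)
  next
    case False
    have "rcomp T (- G) w False = (\<Sum>j\<le>sdeg G. - sp_scale (cF w j)
   (sp_mult (T (w + 2 * of_nat j) False) ((sp_dx ^^ j) G)
    + sp_mult (T (w + 1 + 2 * of_nat j) True) ((sp_dx ^^ j) (sp_Dbar G))))"
      unfolding rcomp_F sdeg_minus
      by (rule sum.cong) (simp_all add: dxp_minus sp_Dbar_minus sp_mult_minus_right sp_scale_minus sp_scale_add sp_scale_diff)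
    then show ?thesis using False by (simp add: sum_negf rcomp_F)
  qed
qed

lemma Lop_negF: "Lop mu (- F) T = - Lop mu F T"
  unfolding Lop_def by (intro ext) (simp add: sp_mult_minus_left sp_D_minus sp_dx_minus sp_scale_minus)
lemma Rop_negF: "Rop mu (- F) T = - Rop mu F T"
  unfolding Rop_def by (simp add: sp_D_minus sp_dx_minus rcomp_negG rcompD_minus sscale_minus)

lemma Rop_lcompD: "Rop lam G (lcompD U) = lcompD (Rop lam G U)"
  unfolding Rop_def by (simp add: lcompD_add lcompD_diff lcompD_minus lcompD_sscale lcompD_rcompD lcompD_rcomp)

lemma act_lcompD: "act lam (1/2) F (lcompD T) = lcompD (act lam 0 (sp_sigma F) T)"
proof -
  obtain f g where F: "F = (f, g)" by (cases F)
  have n: "(0::complex poly, - g) = - (0, g)" by simp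
  show ?thesis
    unfolding act_def F Let_def
    by (simp add: sp_sigma_def n Lop_negF Rop_negF Lop_lcompD_even Lop_lcompD_odd Rop_lcompD
        sev_lcompD sod_lcompD lcompD_add lcompD_diff lcompD_minus del: uminus_Pair)
qed

lemma Rop_rcompD_even: "Rop 0 (f,0) (rcompD T) = rcompD (Rop (1/2) (f,0) T)"
proof -
  have a: "sp_Dbar (f,0) = - sp_D (f,0)" "sp_sigma (f,0) = (f,0)" "sp_Dbar (sp_D (f,0)) = sp_dx (f,0)"
     "sp_sigma (sp_D (f,0)) = - sp_D (f,0)" by (simp_all add: prod_eq_iff)
  show ?thesis
    unfolding Rop_def rcomp_rcompD a rcomp_negG
    using hh2 by (intro ext) (simp add: prod_eq_iff smult_add_right smult_diff_right smult_half mult_2[symmetric])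
qed

lemma Rop_rcompD_odd: "Rop 0 (0,g) (rcompD T) = - rcompD (Rop (1/2) (0,g) T)"
proof -
  have a: "sp_Dbar (0,g) = sp_D (0,g)" "sp_sigma (0,g) = - (0,g)" "sp_Dbar (sp_D (0,g)) = - sp_dx (0,g)"
     "sp_sigma (sp_D (0,g)) = sp_D (0,g)" by (simp_all add: prod_eq_iff)
  show ?thesis
    unfolding Rop_def rcomp_rcompD a rcomp_negG
    using hh2 by (intro ext) (simp add: prod_eq_iff smult_add_right smult_diff_right smult_half mult_2[symmetric])
qed

lemma act_rcompD: "act 0 mu F (rcompD T) = rcompD (act (1/2) mu F T)"
proof -
  obtain f g where F: "F = (f, g)" by (cases F)
  show ?thesis
    unfolding act_def F Let_def
    by (simp add: Lop_rcompD Rop_rcompD_even Rop_rcompD_odd sev_rcompD sod_rcompD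
        rcompD_add rcompD_diff rcompD_minus)
qed



lemma PsiI: "(\<And>z q. T z q \<noteq> 0 \<Longrightarrow> \<exists>j::nat. z = 2 * k - of_nat j \<and> q = (p \<noteq> odd j)) \<Longrightarrow> T \<in> Psi k p"
  unfolding Psi_def by blast
lemma PsiD: "T \<in> Psi k p \<Longrightarrow> T z q \<noteq> 0 \<Longrightarrow> \<exists>j::nat. z = 2 * k - of_nat j \<and> q = (p \<noteq> odd j)"
  unfolding Psi_def by blast

lemma Psi_sub: assumes "T \<in> Psi k p" "\<And>z q. T z q = 0 \<Longrightarrow> S z q = 0" shows "S \<in> Psi k p"
proof (rule PsiI)
  fix z q assume "S z q \<noteq> 0"
  then have "T z q \<noteq> 0" using assms(2) by blast
  then show "\<exists>j::nat. z = 2 * k - of_nat j \<and> q = (p \<noteq> odd j)" by (rule PsiD[OF assms(1)])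
qed
lemma Psi_add: assumes "A \<in> Psi k p" "B \<in> Psi k p" shows "A + B \<in> Psi k p"
proof (rule PsiI)
  fix z q assume "(A + B) z q \<noteq> 0"
  then have "A z q \<noteq> 0 \<or> B z q \<noteq> 0" by auto
  then show "\<exists>j::nat. z = 2 * k - of_nat j \<and> q = (p \<noteq> odd j)" using PsiD[OF assms(1)] PsiD[OF assms(2)] by blast
qed
lemma Psi_uminus: "A \<in> Psi k p \<Longrightarrow> - A \<in> Psi k p"
  by (erule Psi_sub) simp
lemma Psi_diff: "A \<in> Psi k p \<Longrightarrow> B \<in> Psi k p \<Longrightarrow> A - B \<in> Psi k p"
  by (metis Psi_add Psi_uminus diff_conv_add_uminus)
lemma Psi_zero: "0 \<in> Psi k p" by (rule PsiI) simp
lemma Psi_sscale: "A \<in> Psi k p \<Longrightarrow> sscale c A \<in> Psi k p"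
  by (erule Psi_sub) simp
lemma Psi_lmult: "A \<in> Psi k p \<Longrightarrow> lmult G A \<in> Psi k p"
  by (erule Psi_sub) simp
lemma Psi_sev: "A \<in> Psi k p \<Longrightarrow> sev A \<in> Psi k p"
  by (erule Psi_sub, rename_tac z q, case_tac q) (simp_all add: sev_apply zero_prod_def)
lemma Psi_sod: "A \<in> Psi k p \<Longrightarrow> sod A \<in> Psi k p"
  by (erule Psi_sub, rename_tac z q, case_tac q) (simp_all add: sod_apply zero_prod_def)

lemma Psi_up: "A \<in> Psi k p \<Longrightarrow> A \<in> Psi (k + 1/2) (\<not> p)"
proof (rule PsiI)
  fix z q assume "A \<in> Psi k p" "A z q \<noteq> 0"
  then obtain j where "z = 2 * k - of_nat j" "q = (p \<noteq> odd j)" by (metis PsiD)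
  then show "\<exists>j::nat. z = 2 * (k + 1/2) - of_nat j \<and> q = ((\<not> p) \<noteq> odd j)"
    by (intro exI[of _ "Suc j"]) (simp add: algebra_simps)
qed

lemma Psi_lcompD: "A \<in> Psi k p \<Longrightarrow> lcompD A \<in> Psi (k + 1/2) (\<not> p)"
proof (rule PsiI)
  fix z q assume A: "A \<in> Psi k p" and "lcompD A z q \<noteq> 0"
  then have "A z q \<noteq> 0 \<or> A (z - 1) (\<not> q) \<noteq> 0" by auto
  then show "\<exists>j::nat. z = 2 * (k + 1/2) - of_nat j \<and> q = ((\<not> p) \<noteq> odd j)"
  proof
    assume "A z q \<noteq> 0"
    then obtain j where "z = 2 * k - of_nat j" "q = (p \<noteq> odd j)" using PsiD[OF A] by blast
    then show ?thesis by (intro exI[of _ "Suc j"]) (simp add: algebra_simps)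
  next
    assume "A (z - 1) (\<not> q) \<noteq> 0"
    then obtain j where "z - 1 = 2 * k - of_nat j" "(\<not> q) = (p \<noteq> odd j)" using PsiD[OF A] by blast
    then show ?thesis by (intro exI[of _ "j"]) (auto simp add: algebra_simps)
  qed
qed

lemma Psi_rcompD: "A \<in> Psi k p \<Longrightarrow> rcompD A \<in> Psi (k + 1/2) (\<not> p)"
proof (rule PsiI)
  fix z q assume A: "A \<in> Psi k p" and "rcompD A z q \<noteq> 0"
  then have "A (z - 1) (\<not> q) \<noteq> 0" by auto
  then obtain j where "z - 1 = 2 * k - of_nat j" "(\<not> q) = (p \<noteq> odd j)" using PsiD[OF A] by blast
  then show "\<exists>j::nat. z = 2 * (k + 1/2) - of_nat j \<and> q = ((\<not> p) \<noteq> odd j)"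
    by (intro exI[of _ "j"]) (auto simp add: algebra_simps)
qed

lemma sum_nz: "(\<Sum>j\<in>A. f j) \<noteq> 0 \<Longrightarrow> \<exists>j\<in>A. f j \<noteq> 0"
  by (metis sum.neutral)
lemma sp_scale_nz: "sp_scale c a \<noteq> 0 \<Longrightarrow> a \<noteq> 0" by auto
lemma sp_mult_nz: "sp_mult a b \<noteq> 0 \<Longrightarrow> a \<noteq> 0" by auto

lemma Psi_rcomp: "A \<in> Psi k p \<Longrightarrow> rcomp A G \<in> Psi k p"
proof (rule PsiI)
  fix w r assume A: "A \<in> Psi k p" and nz: "rcomp A G w r \<noteq> 0"
  show "\<exists>j::nat. w = 2 * k - of_nat j \<and> r = (p \<noteq> odd j)"
  proof (cases r)
    case True
    with nz have "(\<Sum>j\<le>sdeg G. sp_scale (cT w j)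
   (sp_mult (A (w + 2 * of_nat j) True) ((sp_dx ^^ j) (sp_sigma G)))) \<noteq> 0" by (simp add: rcomp_T)
    then obtain j where "sp_scale (cT w j)
   (sp_mult (A (w + 2 * of_nat j) True) ((sp_dx ^^ j) (sp_sigma G))) \<noteq> 0" by (blast dest: sum_nz)
    then have "A (w + 2 * of_nat j) True \<noteq> 0" by (blast dest: sp_scale_nz sp_mult_nz)
    then obtain i where "w + 2 * of_nat j = 2 * k - of_nat i" "True = (p \<noteq> odd i)" using PsiD[OF A] by blast
    then show ?thesis using True by (intro exI[of _ "i + 2 * j"]) (simp add: algebra_simps)
  next
    case False
    with nz have "(\<Sum>j\<le>sdeg G. sp_scale (cF w j)
   (sp_mult (A (w + 2 * of_nat j) False) ((sp_dx ^^ j) G)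
    + sp_mult (A (w + 1 + 2 * of_nat j) True) ((sp_dx ^^ j) (sp_Dbar G)))) \<noteq> 0" by (simp add: rcomp_F)
    then obtain j where "sp_scale (cF w j) (sp_mult (A (w + 2 * of_nat j) False) ((sp_dx ^^ j) G)
    + sp_mult (A (w + 1 + 2 * of_nat j) True) ((sp_dx ^^ j) (sp_Dbar G))) \<noteq> 0" by (blast dest: sum_nz)
    then have "sp_mult (A (w + 2 * of_nat j) False) ((sp_dx ^^ j) G)
    + sp_mult (A (w + 1 + 2 * of_nat j) True) ((sp_dx ^^ j) (sp_Dbar G)) \<noteq> 0" by (blast dest: sp_scale_nz)
    then have "A (w + 2 * of_nat j) False \<noteq> 0 \<or> A (w + 1 + 2 * of_nat j) True \<noteq> 0" by auto
    then show ?thesis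
    proof
      assume "A (w + 2 * of_nat j) False \<noteq> 0"
      then obtain i where "w + 2 * of_nat j = 2 * k - of_nat i" "False = (p \<noteq> odd i)" using PsiD[OF A] by blast
      then show ?thesis using False by (intro exI[of _ "i + 2 * j"]) (simp add: algebra_simps)
    next
      assume "A (w + 1 + 2 * of_nat j) True \<noteq> 0"
      then obtain i where "w + 1 + 2 * of_nat j = 2 * k - of_nat i" "True = (p \<noteq> odd i)" using PsiD[OF A] by blast
      then show ?thesis using False by (intro exI[of _ "i + 1 + 2 * j"]) (simp add: algebra_simps)
    qed
  qed
qed



lemma Lop_alt: "Lop nu F T = lmult F (- lcompD (lcompD T)) + sscale (1/2) (lmult (sp_D F) (lcompD T)) + sscale nu (lmult (sp_dx F) T)"
  unfolding Lop_def by (intro ext) simp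

lemma half_half: "k + 1/2 + 1/2 = k + (1::complex)" by simp

lemma Psi_up2: "A \<in> Psi k p \<Longrightarrow> A \<in> Psi (k + 1) p"
  using Psi_up[OF Psi_up[of A k p]] by (simp add: half_half)
lemma Psi_lcompD2: "A \<in> Psi k p \<Longrightarrow> lcompD (lcompD A) \<in> Psi (k + 1) p"
  using Psi_lcompD[OF Psi_lcompD[of A k p]] by (simp add: half_half)
lemma Psi_rcompD2: "A \<in> Psi k p \<Longrightarrow> rcompD (rcompD A) \<in> Psi (k + 1) p"
  using Psi_rcompD[OF Psi_rcompD[of A k p]] by (simp add: half_half)
lemma Psi_lcompD1: "A \<in> Psi k p \<Longrightarrow> lcompD A \<in> Psi (k + 1) p"
  using Psi_up[OF Psi_lcompD[of A k p]] by (simp add: half_half)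
lemma Psi_rcompD1: "A \<in> Psi k p \<Longrightarrow> rcompD A \<in> Psi (k + 1) p"
  using Psi_up[OF Psi_rcompD[of A k p]] by (simp add: half_half)

lemma Psi_Lop: "A \<in> Psi k p \<Longrightarrow> Lop nu F A \<in> Psi (k + 1) p"
  unfolding Lop_alt
  by (intro Psi_add Psi_sscale Psi_lmult Psi_uminus Psi_lcompD2 Psi_lcompD1 Psi_up2)
lemma Psi_Rop: "A \<in> Psi k p \<Longrightarrow> Rop nu F A \<in> Psi (k + 1) p"
  unfolding Rop_def
  by (intro Psi_add Psi_sscale Psi_uminus Psi_rcompD2 Psi_rcompD1 Psi_up2 Psi_rcomp)
lemma Psi_act_up: "A \<in> Psi k p \<Longrightarrow> act lam mu F A \<in> Psi (k + 1) p"
  unfolding act_def Let_def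
  by (intro Psi_add Psi_diff Psi_Lop Psi_Rop Psi_sev Psi_sod)

lemma Psi_down:
  assumes A: "A \<in> Psi (k + 1) p" and z1: "A (2 * k + 2) p = 0" and z2: "A (2 * k + 1) (\<not> p) = 0"
  shows "A \<in> Psi k p"
proof (rule PsiI)
  fix z q assume nz: "A z q \<noteq> 0"
  then obtain j where j: "z = 2 * (k + 1) - of_nat j" "q = (p \<noteq> odd j)" using PsiD[OF A] by blast
  show "\<exists>j::nat. z = 2 * k - of_nat j \<and> q = (p \<noteq> odd j)"
  proof (cases j)
    case 0 then show ?thesis using nz z1 j by (simp add: algebra_simps)
  next
    case (Suc i) note i = this
    show ?thesis
    proof (cases i)
      case 0 then show ?thesis using nz z2 j i by (simp add: algebra_simps)
    next
      case (Suc l) then show ?thesis using j i by (intro exI[of _ l]) (simp add: algebra_simps)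
    qed
  qed
qed

lemma psi_hi: assumes A: "A \<in> Psi k p" shows "A (2 * k + of_nat (Suc n)) q = 0"
proof (rule ccontr)
  assume "A (2 * k + of_nat (Suc n)) q \<noteq> 0"
  then obtain j where "2 * k + of_nat (Suc n) = 2 * k - of_nat j" using PsiD[OF A] by blast
  then have "of_nat (Suc n + j) = (0::complex)" by (simp add: algebra_simps)
  then show False by (simp only: of_nat_eq_0_iff)
qed
lemma psi_hi1: "A \<in> Psi k p \<Longrightarrow> A (2 * k + 1) q = 0" using psi_hi[of A k p 0] by simp
lemma psi_hi2: "A \<in> Psi k p \<Longrightarrow> A (2 * k + 2) q = 0" using psi_hi[of A k p 1] by simp
lemma psi_par0: assumes A: "A \<in> Psi k p" shows "A (2 * k) (\<not> p) = 0"
proof (rule ccontr)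
  assume "A (2 * k) (\<not> p) \<noteq> 0"
  then obtain j where "2 * k = 2 * k - of_nat j" "(\<not> p) = (p \<noteq> odd j)" using PsiD[OF A] by blast
  then show False by simp
qed
lemma psi_par1: assumes A: "A \<in> Psi k p" shows "A (2 * k - 1) p = 0"
proof (rule ccontr)
  assume "A (2 * k - 1) p \<noteq> 0"
  then obtain j where "2 * k - 1 = 2 * k - of_nat j" "p = (p \<noteq> odd j)" using PsiD[OF A] by blast
  then have "of_nat j = (1::complex)" "\<not> odd j" by (simp_all add: algebra_simps)
  then show False by (simp only: of_nat_eq_1_iff) simp
qed

lemma rcomp_top_sum:
  assumes A: "A \<in> Psi k p" and w: "w = 2 * k - 1 + of_nat m"
  and f0: "\<And>j. f j = g (A (w + 2 * of_nat j) False) (A (w + 1 + 2 * of_nat j) True) (A (w + 2 * of_nat j) True) j"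
  and g0: "\<And>j x y z. g 0 0 0 j = 0"
  shows "(\<Sum>j\<le>N. f j) = f 0"
proof -
  have "(\<Sum>j\<le>N. f j) = (\<Sum>j\<le>0. f j)"
  proof (rule sum_extend)
    fix j :: nat assume "0 < j"
    then obtain i where i: "j = Suc i" by (cases j) auto
    have e1: "w + 2 * of_nat j = 2 * k + of_nat (Suc (m + 2 * i))" unfolding w i by (simp add: algebra_simps)
    have e2: "w + 1 + 2 * of_nat j = 2 * k + of_nat (Suc (Suc (m + 2 * i)))" unfolding w i by (simp add: algebra_simps)
    show "f j = 0" unfolding f0 e1 e2 psi_hi[OF A] g0 by simp
  qed simp
  then show ?thesis by simp
qed

lemma rcomp_top_F:
  assumes A: "A \<in> Psi k p" and w: "w = 2 * k - 1 + of_nat m"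
  shows "rcomp A G w False = sp_mult (A w False) G + sp_mult (A (w + 1) True) (sp_Dbar G)"
  unfolding rcomp_F
  by (subst rcomp_top_sum[OF A w, where g = "\<lambda>x y z j. sp_scale (cF w j) (sp_mult x ((sp_dx ^^ j) G) + sp_mult y ((sp_dx ^^ j) (sp_Dbar G)))"])
     (simp_all add: cF_def)

lemma rcomp_top_T:
  assumes A: "A \<in> Psi k p" and w: "w = 2 * k - 1 + of_nat m"
  shows "rcomp A G w True = sp_mult (A w True) (sp_sigma G)"
  unfolding rcomp_T
  by (subst rcomp_top_sum[OF A w, where g = "\<lambda>x y z j. sp_scale (cT w j) (sp_mult z ((sp_dx ^^ j) (sp_sigma G)))"])
     (simp_all add: cT_def)

lemma rcomp_top:
  assumes A: "A \<in> Psi k p" and w: "w \<in> {2 * k - 1, 2 * k, 2 * k + 1, 2 * k + 2}"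
  shows "rcomp A G w False = sp_mult (A w False) G + sp_mult (A (w + 1) True) (sp_Dbar G)"
    "rcomp A G w True = sp_mult (A w True) (sp_sigma G)"
proof -
  from w have "\<exists>m :: nat. w = 2 * k - 1 + of_nat m"
  proof (elim insertE)
    assume "w = 2 * k - 1" then show ?thesis by (intro exI[of _ 0]) simp
  next
    assume "w = 2 * k" then show ?thesis by (intro exI[of _ 1]) simp
  next
    assume "w = 2 * k + 1" then show ?thesis by (intro exI[of _ 2]) simp
  next
    assume "w = 2 * k + 2" then show ?thesis by (intro exI[of _ 3]) simp
  qed simp
  then obtain m :: nat where "w = 2 * k - 1 + of_nat m" by blast
  then show "rcomp A G w False = sp_mult (A w False) G + sp_mult (A (w + 1) True) (sp_Dbar G)"
    "rcomp A G w True = sp_mult (A w True) (sp_sigma G)"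
    using rcomp_top_F[OF A] rcomp_top_T[OF A] by blast+
qed



lemma act_top:
  assumes A: "A \<in> Psi k p"
  shows "act lam mu F A (2 * k + 2) p = 0" "act lam mu F A (2 * k + 1) (\<not> p) = 0"
proof -
  obtain f g where F: "F = (f, g)" by (cases F)
  have As: "sev A \<in> Psi k p" "sod A \<in> Psi k p" using A by (simp_all add: Psi_sev Psi_sod)
  have e: "2 * k + 2 - 1 = 2 * k + 1" "2 * k + 1 - 1 = 2 * k" "2 * k - 1 + 1 = 2 * k" "2 * k + 1 + 1 = 2 * k + 2"
    by simp_all
  have h3: "X \<in> Psi k p \<Longrightarrow> X (2 * k + 2 + 1) q = 0 \<and> X (3 + 2 * k) q = 0" for X q
    using psi_hi[of X k p 2 q] by (simp add: algebra_simps)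
  note z = psi_hi1[OF A] psi_hi2[OF A] h3[OF A] psi_hi1[OF As(1)] psi_hi2[OF As(1)] h3[OF As(1)]
    psi_hi1[OF As(2)] psi_hi2[OF As(2)] h3[OF As(2)] psi_par0[OF A] psi_par0[OF As(1)] psi_par0[OF As(2)]
  note r = rcomp_top[OF A] rcomp_top[OF As(1)] rcomp_top[OF As(2)]
  show "act lam mu F A (2 * k + 2) p = 0"
    unfolding act_def Let_def Lop_def Rop_def F
    using hh2 by (cases p) (simp_all add: e z r prod_eq_iff pd smult_half mult_2[symmetric] sev_apply sod_apply)
  show "act lam mu F A (2 * k + 1) (\<not> p) = 0"
    unfolding act_def Let_def Lop_def Rop_def F
    using hh2 apply (cases p) apply (simp_all add: e z r prod_eq_iff pd smult_half mult_2[symmetric] sev_apply sod_apply)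
    apply algebra done
qed



lemma Psi_act: "A \<in> Psi k p \<Longrightarrow> act lam mu F A \<in> Psi k p"
  by (rule Psi_down[OF Psi_act_up]) (simp_all add: act_top)

definition DopN :: "nat \<Rightarrow> symb set" where
  "DopN N = {T. \<forall>z q. T z q \<noteq> 0 \<longrightarrow> (\<exists>j\<le>N. z = of_nat j \<and> q = odd j)}"

lemma DopNI: "(\<And>z q. T z q \<noteq> 0 \<Longrightarrow> \<exists>j\<le>N. z = of_nat j \<and> q = odd j) \<Longrightarrow> T \<in> DopN N"
  unfolding DopN_def by blast
lemma DopND: "T \<in> DopN N \<Longrightarrow> T z q \<noteq> 0 \<Longrightarrow> \<exists>j\<le>N. z = of_nat j \<and> q = odd j"
  unfolding DopN_def by blast

lemma DopN_sub: assumes "T \<in> DopN N" "\<And>z q. T z q = 0 \<Longrightarrow> S z q = 0" shows "S \<in> DopN N"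
proof (rule DopNI)
  fix z q assume "S z q \<noteq> 0"
  then have "T z q \<noteq> 0" using assms(2) by blast
  then show "\<exists>j\<le>N. z = of_nat j \<and> q = odd j" by (rule DopND[OF assms(1)])
qed
lemma DopN_add: assumes "A \<in> DopN N" "B \<in> DopN N" shows "A + B \<in> DopN N"
proof (rule DopNI)
  fix z q assume "(A + B) z q \<noteq> 0"
  then have "A z q \<noteq> 0 \<or> B z q \<noteq> 0" by auto
  then show "\<exists>j\<le>N. z = of_nat j \<and> q = odd j" using DopND[OF assms(1)] DopND[OF assms(2)] by blast
qed
lemma DopN_uminus: "A \<in> DopN N \<Longrightarrow> - A \<in> DopN N" by (erule DopN_sub) simp
lemma DopN_diff: "A \<in> DopN N \<Longrightarrow> B \<in> DopN N \<Longrightarrow> A - B \<in> DopN N"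
  by (metis DopN_add DopN_uminus diff_conv_add_uminus)
lemma DopN_zero: "0 \<in> DopN N" by (rule DopNI) simp
lemma DopN_sscale: "A \<in> DopN N \<Longrightarrow> sscale c A \<in> DopN N" by (erule DopN_sub) simp
lemma DopN_lmult: "A \<in> DopN N \<Longrightarrow> lmult G A \<in> DopN N" by (erule DopN_sub) simp
lemma DopN_sev: "A \<in> DopN N \<Longrightarrow> sev A \<in> DopN N"
  by (erule DopN_sub, rename_tac z q, case_tac q) (simp_all add: sev_apply zero_prod_def)
lemma DopN_sod: "A \<in> DopN N \<Longrightarrow> sod A \<in> DopN N"
  by (erule DopN_sub, rename_tac z q, case_tac q) (simp_all add: sod_apply zero_prod_def)
lemma DopN_mono: "A \<in> DopN N \<Longrightarrow> N \<le> M \<Longrightarrow> A \<in> DopN M"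
  unfolding DopN_def mem_Collect_eq by (meson order_trans)

lemma DopN_lcompD: assumes A: "A \<in> DopN N" shows "lcompD A \<in> DopN (Suc N)"
proof (rule DopNI)
  fix z q assume "lcompD A z q \<noteq> 0"
  then have "A z q \<noteq> 0 \<or> A (z - 1) (\<not> q) \<noteq> 0" by auto
  then show "\<exists>j\<le>Suc N. z = of_nat j \<and> q = odd j"
  proof
    assume "A z q \<noteq> 0"
    then obtain j where "j \<le> N" "z = of_nat j" "q = odd j" using DopND[OF A] by blast
    then show ?thesis by (intro exI[of _ j]) simp
  next
    assume "A (z - 1) (\<not> q) \<noteq> 0"
    then obtain j where "j \<le> N" "z - 1 = of_nat j" "(\<not> q) = odd j" using DopND[OF A] by blast
    then show ?thesis by (intro exI[of _ "Suc j"]) (auto simp add: algebra_simps)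
  qed
qed

lemma DopN_rcompD: assumes A: "A \<in> DopN N" shows "rcompD A \<in> DopN (Suc N)"
proof (rule DopNI)
  fix z q assume "rcompD A z q \<noteq> 0"
  then have "A (z - 1) (\<not> q) \<noteq> 0" by auto
  then obtain j where "j \<le> N" "z - 1 = of_nat j" "(\<not> q) = odd j" using DopND[OF A] by blast
  then show "\<exists>j\<le>Suc N. z = of_nat j \<and> q = odd j" by (intro exI[of _ "Suc j"]) (auto simp add: algebra_simps)
qed

lemma gch_nat_nz: "(of_nat m gchoose j :: complex) \<noteq> 0 \<Longrightarrow> j \<le> m"
  by (metis binomial_eq_0 not_le of_nat_0 binomial_gbinomial)

lemma DopN_rcomp: assumes A: "A \<in> DopN N" shows "rcomp A G \<in> DopN N"
proof (rule DopNI)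
  fix w r assume nz: "rcomp A G w r \<noteq> 0"
  show "\<exists>j\<le>N. w = of_nat j \<and> r = odd j"
  proof (cases r)
    case True
    with nz have "(\<Sum>j\<le>sdeg G. sp_scale (cT w j)
   (sp_mult (A (w + 2 * of_nat j) True) ((sp_dx ^^ j) (sp_sigma G)))) \<noteq> 0" by (simp add: rcomp_T)
    then obtain j where "sp_scale (cT w j)
   (sp_mult (A (w + 2 * of_nat j) True) ((sp_dx ^^ j) (sp_sigma G))) \<noteq> 0" by (blast dest: sum_nz)
    then have c: "cT w j \<noteq> 0" and a: "A (w + 2 * of_nat j) True \<noteq> 0" by (auto dest: sp_mult_nz)
    from a obtain n where n: "n \<le> N" "w + 2 * of_nat j = of_nat n" "odd n" using DopND[OF A] by blast
    then obtain m where m: "n = Suc (2 * m)" by (metis oddE Suc_eq_plus1)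
    have "(w + 2 * of_nat j - 1) / 2 = of_nat m" using n(2) m by (simp add: field_simps)
    then have "j \<le> m" using c unfolding cT_def by (auto dest: gch_nat_nz)
    then have "w = of_nat (n - 2 * j)" using n(2) m by (simp add: of_nat_diff algebra_simps)
    then show ?thesis using True n m \<open>j \<le> m\<close> by (intro exI[of _ "n - 2 * j"]) auto
  next
    case False
    with nz have "(\<Sum>j\<le>sdeg G. sp_scale (cF w j)
   (sp_mult (A (w + 2 * of_nat j) False) ((sp_dx ^^ j) G)
    + sp_mult (A (w + 1 + 2 * of_nat j) True) ((sp_dx ^^ j) (sp_Dbar G)))) \<noteq> 0" by (simp add: rcomp_F)
    then obtain j where s: "sp_scale (cF w j) (sp_mult (A (w + 2 * of_nat j) False) ((sp_dx ^^ j) G)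
    + sp_mult (A (w + 1 + 2 * of_nat j) True) ((sp_dx ^^ j) (sp_Dbar G))) \<noteq> 0" by (blast dest: sum_nz)
    then have c: "cF w j \<noteq> 0" by auto
    from s have "A (w + 2 * of_nat j) False \<noteq> 0 \<or> A (w + 1 + 2 * of_nat j) True \<noteq> 0" by auto
    then show ?thesis
    proof
      assume a: "A (w + 2 * of_nat j) False \<noteq> 0"
      then obtain n where n: "n \<le> N" "w + 2 * of_nat j = of_nat n" "\<not> odd n" using DopND[OF A] by blast
      then obtain m where m: "n = 2 * m" by (metis evenE)
      have "(w + 2 * of_nat j) / 2 = of_nat m" using n(2) m by (simp add: field_simps)
      then have "j \<le> m" using c unfolding cF_def by (auto dest: gch_nat_nz)
      then have "w = of_nat (n - 2 * j)" using n(2) m by (simp add: of_nat_diff algebra_simps)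
      then show ?thesis using False n m \<open>j \<le> m\<close> by (intro exI[of _ "n - 2 * j"]) auto
    next
      assume a: "A (w + 1 + 2 * of_nat j) True \<noteq> 0"
      then obtain n where n: "n \<le> N" "w + 1 + 2 * of_nat j = of_nat n" "odd n" using DopND[OF A] by blast
      then obtain m where m: "n = Suc (2 * m)" by (metis oddE Suc_eq_plus1)
      have "(w + 2 * of_nat j) / 2 = of_nat m" using n(2) m by (simp add: field_simps)
      then have "j \<le> m" using c unfolding cF_def by (auto dest: gch_nat_nz)
      then have "w = of_nat (2 * m - 2 * j)" using n(2) m by (simp add: of_nat_diff algebra_simps)
      then show ?thesis using False n m \<open>j \<le> m\<close> by (intro exI[of _ "2 * m - 2 * j"]) auto
    qed
  qed
qed



lemma DopN_Psi: assumes A: "A \<in> DopN N" shows "A \<in> Psi (of_nat N / 2) (odd N)"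
proof (rule PsiI)
  fix z q assume "A z q \<noteq> 0"
  then obtain j where j: "j \<le> N" "z = of_nat j" "q = odd j" using DopND[OF A] by blast
  then show "\<exists>i::nat. z = 2 * (of_nat N / 2) - of_nat i \<and> q = (odd N \<noteq> odd i)"
    by (intro exI[of _ "N - j"]) (auto simp add: of_nat_diff)
qed

lemma Psi_DopN: assumes A: "A \<in> Psi (of_nat N / 2) (odd N)" and B: "A \<in> DopN M" shows "A \<in> DopN N"
proof (rule DopNI)
  fix z q assume nz: "A z q \<noteq> 0"
  obtain j where j: "j \<le> M" "z = of_nat j" "q = odd j" using DopND[OF B nz] by blast
  obtain i where i: "z = 2 * (of_nat N / 2) - of_nat i" using PsiD[OF A nz] by blast
  have "of_nat (j + i) = (of_nat N :: complex)" using i j by simp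
  then have "j + i = N" by (simp only: of_nat_eq_iff)
  then show "\<exists>j\<le>N. z = of_nat j \<and> q = odd j" using j by auto
qed

lemma DopN_Lop: "A \<in> DopN N \<Longrightarrow> Lop nu F A \<in> DopN (Suc (Suc N))"
proof -
  assume A: "A \<in> DopN N"
  have a: "lcompD A \<in> DopN (Suc (Suc N))" by (rule DopN_mono[OF DopN_lcompD[OF A]]) simp
  have b: "A \<in> DopN (Suc (Suc N))" by (rule DopN_mono[OF A]) simp
  show ?thesis unfolding Lop_alt
    by (intro DopN_add DopN_sscale DopN_lmult DopN_uminus DopN_lcompD A a b)
qed
lemma DopN_Rop: "A \<in> DopN N \<Longrightarrow> Rop nu F A \<in> DopN (Suc (Suc N))"
proof -
  assume A: "A \<in> DopN N"
  have a: "rcompD (rcomp A G) \<in> DopN (Suc (Suc N))" for G by (rule DopN_mono[OF DopN_rcompD[OF DopN_rcomp[OF A]]]) simp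
  have b: "rcomp A G \<in> DopN (Suc (Suc N))" for G by (rule DopN_mono[OF DopN_rcomp[OF A]]) simp
  show ?thesis unfolding Rop_def
    by (intro DopN_add DopN_sscale DopN_uminus DopN_rcompD DopN_rcomp A a b)
qed

lemma DopN_act: assumes A: "A \<in> DopN N" shows "act lam mu F A \<in> DopN N"
proof -
  have "act lam mu F A \<in> DopN (Suc (Suc N))"
    unfolding act_def Let_def
    by (intro DopN_add DopN_diff DopN_Lop DopN_Rop DopN_sev DopN_sod A)
  moreover have "act lam mu F A \<in> Psi (of_nat N / 2) (odd N)"
    by (rule Psi_act[OF DopN_Psi[OF A]])
  ultimately show ?thesis by (rule Psi_DopN[rotated])
qed

lemma Dop_eq: "T \<in> Dop \<longleftrightarrow> (\<exists>N. T \<in> DopN N)"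
proof
  assume T: "T \<in> Dop"
  let ?J = "{j::nat. \<exists>q. T (of_nat j) q \<noteq> 0}"
  have fin: "finite {z. \<exists>q. T z q \<noteq> 0}" using T unfolding Dop_def by blast
  have "of_nat ` ?J \<subseteq> {z. \<exists>q. T z q \<noteq> 0}" by auto
  then have "finite (of_nat ` ?J :: complex set)" using fin by (rule finite_subset)
  then have "finite ?J" by (rule finite_imageD) (simp add: inj_on_def)
  then obtain N where N: "\<forall>j\<in>?J. j \<le> N" using finite_nat_set_iff_bounded_le by blast
  have "T \<in> DopN N"
  proof (rule DopNI)
    fix z q assume nz: "T z q \<noteq> 0"
    then obtain j :: nat where j: "z = of_nat j" "q = odd j" using T unfolding Dop_def by blast
    then have "j \<in> ?J" using nz by auto
    then show "\<exists>j\<le>N. z = of_nat j \<and> q = odd j" using N j by blast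
  qed
  then show "\<exists>N. T \<in> DopN N" by blast
next
  assume "\<exists>N. T \<in> DopN N"
  then obtain N where T: "T \<in> DopN N" by blast
  have "{z. \<exists>q. T z q \<noteq> 0} \<subseteq> of_nat ` {..N}" using DopND[OF T] by blast
  then have "finite {z. \<exists>q. T z q \<noteq> 0}" by (rule finite_subset) simp
  moreover have "\<forall>z q. T z q \<noteq> 0 \<longrightarrow> (\<exists>j::nat. z = of_nat j \<and> q = odd j)" using DopND[OF T] by blast
  ultimately show "T \<in> Dop" unfolding Dop_def by blast
qed

lemma DopN_Dop: "T \<in> DopN N \<Longrightarrow> T \<in> Dop" using Dop_eq by blast

lemma Dop_le_eq: "Dop_le (real N / 2) = DopN N"
proof (intro set_eqI iffI)
  fix T assume "T \<in> Dop_le (real N / 2)"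
  then have T: "T \<in> Dop" and R: "\<And>z q. T z q \<noteq> 0 \<Longrightarrow> Re z \<le> real N" unfolding Dop_le_def by auto
  show "T \<in> DopN N"
  proof (rule DopNI)
    fix z q assume nz: "T z q \<noteq> 0"
    then obtain j :: nat where j: "z = of_nat j" "q = odd j" using T unfolding Dop_def by blast
    then have "j \<le> N" using R[OF nz] by simp
    then show "\<exists>j\<le>N. z = of_nat j \<and> q = odd j" using j by blast
  qed
next
  fix T assume T: "T \<in> DopN N"
  then have "T \<in> Dop" by (rule DopN_Dop)
  moreover have "Re z \<le> 2 * (real N / 2)" if "T z q \<noteq> 0" for z q
    using DopND[OF T that] by auto
  ultimately show "T \<in> Dop_le (real N / 2)" unfolding Dop_le_def by blast
qed

lemma Dop_le0: "Dop_le 0 = DopN 0" using Dop_le_eq[of 0] by simp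
lemma Dop_le1: "Dop_le (1/2) = DopN 1" using Dop_le_eq[of 1] by simp



lemma sigma_eq0: "sp_sigma a = 0 \<Longrightarrow> a = 0"
  by (metis sp_sigma_sigma sp_sigma_zero)

lemma DopN_big: assumes T: "T \<in> DopN N" and n: "N < n" shows "T (of_nat n) q = 0"
proof (rule ccontr)
  assume "T (of_nat n) q \<noteq> 0"
  then obtain j where "j \<le> N" "of_nat n = (of_nat j :: complex)" using DopND[OF T] by blast
  then have "j \<le> N" "n = j" by (simp_all only: of_nat_eq_iff)
  then show False using n by simp
qed

lemma lcompD_low:
  assumes T: "T \<in> DopN N" and L: "lcompD T \<in> DopN M" and n: "M \<le> n"
  shows "T (of_nat n) q = 0"
proof -
  have "\<And>m q. Suc N - m = k \<Longrightarrow> M \<le> m \<Longrightarrow> T (of_nat m) q = 0" for k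
  proof (induct k)
    case 0 then show ?case by (intro DopN_big[OF T]) simp
  next
    case (Suc k)
    then have IH: "T (of_nat (Suc m)) q' = 0" for q' by (intro Suc.hyps) simp_all
    have "lcompD T (of_nat (Suc m)) (\<not> q) = 0" by (rule DopN_big[OF L]) (use Suc in simp)
    then have "sp_sigma (T (of_nat m) q) = 0" using IH by simp
    then show ?case by (rule sigma_eq0)
  qed
  then show ?thesis using n by blast
qed

lemma lcompD_inj0: assumes T: "T \<in> DopN N" and L: "lcompD T \<in> DopN 0" shows "T = 0"
proof (intro ext)
  fix z q show "T z q = 0 z q"
  proof (rule ccontr)
    assume nz: "T z q \<noteq> 0 z q"
    then obtain j where "z = of_nat j" using DopND[OF T] by fastforce
    then show False using nz lcompD_low[OF T L, of j q] by simp
  qed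
qed

lemma lcompD_le: assumes T: "T \<in> DopN N" and L: "lcompD T \<in> DopN (Suc M)" shows "T \<in> DopN M"
proof (rule DopNI)
  fix z q assume nz: "T z q \<noteq> 0"
  then obtain j where j: "z = of_nat j" "q = odd j" using DopND[OF T] by blast
  have "j \<le> M"
  proof (rule ccontr)
    assume "\<not> j \<le> M" then have "Suc M \<le> j" by simp
    then show False using nz j lcompD_low[OF T L, of j q] by simp
  qed
  then show "\<exists>j\<le>M. z = of_nat j \<and> q = odd j" using j by blast
qed

lemma decomp_l: "S \<in> DopN N \<Longrightarrow> \<exists>T\<in>DopN N. S - lcompD T \<in> DopN 0"
proof (induct N arbitrary: S)
  case 0 then show ?case by (intro bexI[of _ 0]) (simp_all add: DopN_zero)
next
  case (Suc N)
  define T1 where "T1 = (\<lambda>(z::complex) q. if z = of_nat N \<and> q = odd N then sp_sigma (S (of_nat (Suc N)) (odd (Suc N))) else 0)"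
  have T1: "T1 \<in> DopN N" by (rule DopNI) (auto simp: T1_def split: if_splits)
  have "S - lcompD T1 \<in> DopN (Suc N)"
    by (intro DopN_diff Suc.prems DopN_lcompD T1)
  have S': "S - lcompD T1 \<in> DopN N"
  proof (rule DopNI)
    fix z q assume nz: "(S - lcompD T1) z q \<noteq> 0"
    then obtain j where j: "j \<le> Suc N" "z = of_nat j" "q = odd j"
      using DopND[OF \<open>S - lcompD T1 \<in> DopN (Suc N)\<close>] by blast
    have "j \<noteq> Suc N"
    proof
      assume e: "j = Suc N"
      have "T1 (of_nat (Suc N)) (odd (Suc N)) = 0" by (simp add: T1_def)
      moreover have "T1 (of_nat (Suc N) - 1) (\<not> odd (Suc N)) = sp_sigma (S (of_nat (Suc N)) (odd (Suc N)))"
        by (simp add: T1_def)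
      ultimately have "(S - lcompD T1) (of_nat (Suc N)) (odd (Suc N)) = 0" by simp
      then show False using nz j e by simp
    qed
    then show "\<exists>j\<le>N. z = of_nat j \<and> q = odd j" using j by auto
  qed
  obtain T2 where T2: "T2 \<in> DopN N" "S - lcompD T1 - lcompD T2 \<in> DopN 0" using Suc.hyps[OF S'] by blast
  show ?case
  proof (intro bexI[of _ "T1 + T2"])
    show "S - lcompD (T1 + T2) \<in> DopN 0" using T2(2) by (simp add: lcompD_add algebra_simps)
    show "T1 + T2 \<in> DopN (Suc N)" by (intro DopN_add DopN_mono[OF T1] DopN_mono[OF T2(1)]) simp_all
  qed
qed

lemma decomp_r: assumes S: "S \<in> DopN N" shows "\<exists>T\<in>DopN N. S - rcompD T \<in> DopN 0"
proof -
  define T where "T = (\<lambda>z q. if z = -1 then 0 else S (z + 1) (\<not> q))"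
  have T: "T \<in> DopN N"
  proof (rule DopNI)
    fix z q assume nz: "T z q \<noteq> 0"
    then have z: "z \<noteq> -1" and s: "S (z + 1) (\<not> q) \<noteq> 0" by (auto simp: T_def split: if_splits)
    obtain j where j: "j \<le> N" "z + 1 = of_nat j" "(\<not> q) = odd j" using DopND[OF S s] by blast
    have "j \<noteq> 0"
    proof
      assume "j = 0" with j(2) have "z = -1" by (simp add: eq_neg_iff_add_eq_0)
      with z show False by simp
    qed
    then obtain i where i: "j = Suc i" by (cases j) auto
    show "\<exists>j\<le>N. z = of_nat j \<and> q = odd j" using j i by (intro exI[of _ i]) (auto simp: algebra_simps)
  qed
  have "S - rcompD T \<in> DopN 0"
  proof (rule DopNI)
    fix z q assume nz: "(S - rcompD T) z q \<noteq> 0"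
    then have "z = 0" by (auto simp: T_def split: if_splits)
    then show "\<exists>j\<le>0. z = of_nat j \<and> q = odd j" using nz DopND[OF S, of z q] by (auto simp: T_def)
  qed
  then show ?thesis using T by blast
qed

lemma rcompD_inj0: assumes T: "T \<in> DopN N" and R: "rcompD T \<in> DopN 0" shows "T = 0"
proof (intro ext)
  fix z q show "T z q = 0 z q"
  proof (rule ccontr)
    assume nz: "T z q \<noteq> 0 z q"
    then obtain j where j: "z = of_nat j" using DopND[OF T] by fastforce
    have "rcompD T (z + 1) (\<not> q) \<noteq> 0" using nz by simp
    then obtain i where "i \<le> (0::nat)" "z + 1 = of_nat i" using DopND[OF R] by blast
    moreover have "of_nat (Suc j) \<noteq> (0::complex)" by (simp only: of_nat_eq_0_iff)
    ultimately show False using j by (simp add: add.commute)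
  qed
qed



lemma Psi_drop: assumes X: "X \<in> Psi (k + 1/2) (\<not> p)" and z: "X (2 * k + 1) (\<not> p) = 0" shows "X \<in> Psi k p"
proof (rule PsiI)
  fix w q assume nz: "X w q \<noteq> 0"
  then obtain j where j: "w = 2 * (k + 1/2) - of_nat j" "q = ((\<not> p) \<noteq> odd j)" using PsiD[OF X] by blast
  show "\<exists>j::nat. w = 2 * k - of_nat j \<and> q = (p \<noteq> odd j)"
  proof (cases j)
    case 0 then show ?thesis using nz z j by (simp add: algebra_simps)
  next
    case (Suc i) then show ?thesis using j by (intro exI[of _ i]) (auto simp add: algebra_simps)
  qed
qed

lemma nat_neg_eq: "(of_nat i :: complex) = - 1 - of_nat j \<Longrightarrow> False"
proof -
  assume "(of_nat i :: complex) = - 1 - of_nat j"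
  then have "of_nat (i + Suc j) = (0::complex)" by (simp add: algebra_simps)
  then show False by (simp only: of_nat_eq_0_iff)
qed

lemma low_zero:
  assumes U: "U \<in> Psi (-1) False" and L: "lcompD U \<in> DopN M"
  shows "U = 0"
proof -
  have Z: "U (-1 - of_nat j) q = 0" for j q
  proof (induct j arbitrary: q)
    case 0
    show ?case
    proof (rule ccontr)
      assume "U (-1 - of_nat 0) q \<noteq> 0"
      then obtain i where "(-1 - of_nat 0 :: complex) = 2 * (-1) - of_nat i" using PsiD[OF U] by blast
      then have "of_nat i = (1::complex) - 2" by (simp add: algebra_simps)
      then have "of_nat (Suc i) = (0::complex)" by (simp add: algebra_simps)
      then show False by (simp only: of_nat_eq_0_iff)
    qed
  next
    case (Suc j)
    have "lcompD U (-1 - of_nat j) (\<not> q) = 0"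
    proof (rule ccontr)
      assume "lcompD U (-1 - of_nat j) (\<not> q) \<noteq> 0"
      then obtain i where "(-1 - of_nat j :: complex) = of_nat i" using DopND[OF L] by blast
      then show False using nat_neg_eq by metis
    qed
    moreover have "(-1 - of_nat j - 1 :: complex) = -1 - of_nat (Suc j)" by (simp add: algebra_simps)
    ultimately have "sp_sigma (U (-1 - of_nat (Suc j)) q) = 0" using Suc[of "\<not> q"] by simp
    then show ?case by (rule sigma_eq0)
  qed
  show ?thesis
  proof (intro ext)
    fix z q show "U z q = 0 z q"
    proof (rule ccontr)
      assume nz: "U z q \<noteq> 0 z q"
      then obtain i where zi: "z = 2 * (-1) - of_nat i" using PsiD[OF U] by auto
      have zz: "z = -1 - of_nat (Suc i)" unfolding zi by (simp add: algebra_simps)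
      have "U z q = 0" unfolding zz by (rule Z)
      then show False using nz by simp
    qed
  qed
qed

definition upow :: "spoly \<Rightarrow> nat \<Rightarrow> spoly" where
  "upow s j = ((\<lambda>x. - sp_sigma (sp_Dbar x)) ^^ j) s"

definition Bsym :: "spoly \<Rightarrow> symb" where
  "Bsym s = (\<lambda>z q. if (\<exists>j::nat. z = -1 - of_nat j \<and> q = even j) then upow s (THE j::nat. z = -1 - of_nat j) else 0)"

lemma the_j: "(THE i::nat. (-1 - of_nat j :: complex) = -1 - of_nat i) = j"
  by (rule the_equality) simp_all

lemma Bsym_at: "Bsym s (-1 - of_nat j) (even j) = upow s j"
  unfolding Bsym_def by (auto simp: the_j)
lemma Bsym_off: "\<not> (\<exists>j::nat. z = -1 - of_nat j \<and> q = even j) \<Longrightarrow> Bsym s z q = 0"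
  unfolding Bsym_def by auto
lemma Bsym_top: "Bsym s (-1) True = s"
  using Bsym_at[of s 0] by (simp add: upow_def)

lemma Bsym_Psi: "Bsym s \<in> Psi (-1/2) True"
proof (rule PsiI)
  fix z q assume "Bsym s z q \<noteq> 0"
  then obtain j :: nat where "z = -1 - of_nat j" "q = even j" using Bsym_off by blast
  then show "\<exists>j::nat. z = 2 * (-1/2) - of_nat j \<and> q = (True \<noteq> odd j)" by auto
qed

lemma Bsym_l: "lcompD (Bsym s) \<in> DopN 0"
proof (rule DopNI)
  fix z q assume nz: "lcompD (Bsym s) z q \<noteq> 0"
  show "\<exists>j\<le>0. z = of_nat j \<and> q = odd j"
  proof (cases "\<exists>j::nat. z = -1 - of_nat j \<and> q = even j")
    case True
    then obtain j :: nat where j: "z = -1 - of_nat j" "q = even j" by blast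
    have e: "z - 1 = -1 - of_nat (Suc j)" "(\<not> q) = even (Suc j)" unfolding j by (simp_all add: algebra_simps)
    have "lcompD (Bsym s) z q = sp_Dbar (upow s j) + sp_sigma (upow s (Suc j))"
      unfolding lcompD_apply e using Bsym_at[of s j] Bsym_at[of s "Suc j"] j(1) e(2) j(2) by simp
    also have "\<dots> = 0" by (simp add: upow_def sp_sigma_minus)
    finally show ?thesis using nz by simp
  next
    case False
    then have "Bsym s z q = 0" by (rule Bsym_off)
    then have "Bsym s (z - 1) (\<not> q) \<noteq> 0" using nz by auto
    then obtain j :: nat where j: "z - 1 = -1 - of_nat j" "(\<not> q) = even j" using Bsym_off by blast
    show ?thesis
    proof (cases j)
      case 0 then show ?thesis using j by simp
    next
      case (Suc i)
      have "z = (z - 1) + 1" by simp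
      also have "\<dots> = -1 - of_nat i" unfolding j(1) Suc by (simp add: algebra_simps)
      finally have "z = -1 - of_nat i \<and> q = even i" using j(2) Suc by simp
      then show ?thesis using False by blast
    qed
  qed
qed



lemma KsubI: "0 \<in> S \<Longrightarrow> (\<And>a b. a \<in> S \<Longrightarrow> b \<in> S \<Longrightarrow> a + b \<in> S) \<Longrightarrow> (\<And>c a. a \<in> S \<Longrightarrow> sscale c a \<in> S)
  \<Longrightarrow> (\<And>F a. a \<in> S \<Longrightarrow> act lam mu F a \<in> S) \<Longrightarrow> Ksub lam mu S"
  unfolding Ksub_def by blast

lemma Dop_add: "x \<in> Dop \<Longrightarrow> y \<in> Dop \<Longrightarrow> x + y \<in> Dop"
proof -
  assume "x \<in> Dop" "y \<in> Dop"
  then obtain N M where "x \<in> DopN N" "y \<in> DopN M" using Dop_eq by blast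
  then have "x \<in> DopN (N + M)" "y \<in> DopN (N + M)" by (auto elim: DopN_mono)
  then show ?thesis using Dop_eq DopN_add by blast
qed
lemma Dop_zero: "0 \<in> Dop" using Dop_eq DopN_zero by blast
lemma Dop_sscale: "x \<in> Dop \<Longrightarrow> sscale c x \<in> Dop" using Dop_eq DopN_sscale by blast
lemma Dop_act: "x \<in> Dop \<Longrightarrow> act lam mu F x \<in> Dop" using Dop_eq DopN_act by blast
lemma Dop_lcompD: "x \<in> Dop \<Longrightarrow> lcompD x \<in> Dop" using Dop_eq DopN_lcompD by blast
lemma Dop_rcompD: "x \<in> Dop \<Longrightarrow> rcompD x \<in> Dop" using Dop_eq DopN_rcompD by blast

lemma KsubDopN: "Ksub lam mu (DopN N)"
  by (intro KsubI DopN_zero DopN_add DopN_sscale DopN_act)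
lemma KsubPsi: "Ksub lam mu (Psi k p)"
  by (intro KsubI Psi_zero Psi_add Psi_sscale Psi_act)

lemma sigma2: "sp_sigma (sp_sigma F) = F" by simp

lemma part1: "Kdirect lam (1/2) Dop (Dop_le 0) (dbar_left ` Dop)"
  unfolding Kdirect_def Dop_le0 dbar_left_def
proof (intro conjI)
  show "Ksub lam (1/2) (DopN 0)" by (rule KsubDopN)
  show "Ksub lam (1/2) (lcompD ` Dop)"
  proof (rule KsubI)
    show "0 \<in> lcompD ` Dop" using Dop_zero by (metis image_eqI lcompD_zero)
    fix a b assume "a \<in> lcompD ` Dop" "b \<in> lcompD ` Dop"
    then show "a + b \<in> lcompD ` Dop" by (auto simp: lcompD_add[symmetric] intro: Dop_add)
  next
    fix c a assume "a \<in> lcompD ` Dop"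
    then show "sscale c a \<in> lcompD ` Dop" by (auto simp: lcompD_sscale[symmetric] intro: Dop_sscale)
  next
    fix F a assume "a \<in> lcompD ` Dop"
    then obtain x where x: "x \<in> Dop" "a = lcompD x" by blast
    have "act lam (1/2) F a = lcompD (act lam 0 (sp_sigma F) x)" unfolding x by (rule act_lcompD)
    then show "act lam (1/2) F a \<in> lcompD ` Dop" using Dop_act[OF x(1)] by blast
  qed
  show "DopN 0 \<inter> lcompD ` Dop = {0}"
  proof
    show "DopN 0 \<inter> lcompD ` Dop \<subseteq> {0}"
    proof
      fix a assume "a \<in> DopN 0 \<inter> lcompD ` Dop"
      then obtain x where x: "x \<in> Dop" "a = lcompD x" "lcompD x \<in> DopN 0" by blast
      obtain N where "x \<in> DopN N" using x(1) Dop_eq by blast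
      then have "x = 0" using lcompD_inj0 x(3) by blast
      then show "a \<in> {0}" using x by simp
    qed
    show "{0} \<subseteq> DopN 0 \<inter> lcompD ` Dop" using DopN_zero Dop_zero by (auto intro: image_eqI[of 0 _ 0])
  qed
  show "Dop = {a + b |a b. a \<in> DopN 0 \<and> b \<in> lcompD ` Dop}"
  proof (intro set_eqI iffI)
    fix S assume "S \<in> Dop"
    then obtain N where "S \<in> DopN N" using Dop_eq by blast
    then obtain T where T: "T \<in> DopN N" "S - lcompD T \<in> DopN 0" using decomp_l by blast
    have "S = (S - lcompD T) + lcompD T" by simp
    then show "S \<in> {a + b |a b. a \<in> DopN 0 \<and> b \<in> lcompD ` Dop}" using T DopN_Dop by blast
  next
    fix S assume "S \<in> {a + b |a b. a \<in> DopN 0 \<and> b \<in> lcompD ` Dop}"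
    then show "S \<in> Dop" by (auto intro: Dop_add Dop_lcompD DopN_Dop)
  qed
qed

lemma part3: "Kdirect 0 mu Dop (Dop_le 0) (dbar_right ` Dop)"
  unfolding Kdirect_def Dop_le0 dbar_right_def
proof (intro conjI)
  show "Ksub 0 mu (DopN 0)" by (rule KsubDopN)
  show "Ksub 0 mu (rcompD ` Dop)"
  proof (rule KsubI)
    show "0 \<in> rcompD ` Dop" using Dop_zero by (metis image_eqI rcompD_zero)
    fix a b assume "a \<in> rcompD ` Dop" "b \<in> rcompD ` Dop"
    then show "a + b \<in> rcompD ` Dop" by (auto simp: rcompD_add[symmetric] intro: Dop_add)
  next
    fix c a assume "a \<in> rcompD ` Dop"
    then show "sscale c a \<in> rcompD ` Dop" by (auto simp: rcompD_sscale[symmetric] intro: Dop_sscale)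
  next
    fix F a assume "a \<in> rcompD ` Dop"
    then obtain x where x: "x \<in> Dop" "a = rcompD x" by blast
    have "act 0 mu F a = rcompD (act (1/2) mu F x)" unfolding x by (rule act_rcompD)
    then show "act 0 mu F a \<in> rcompD ` Dop" using Dop_act[OF x(1)] by blast
  qed
  show "DopN 0 \<inter> rcompD ` Dop = {0}"
  proof
    show "DopN 0 \<inter> rcompD ` Dop \<subseteq> {0}"
    proof
      fix a assume "a \<in> DopN 0 \<inter> rcompD ` Dop"
      then obtain x where x: "x \<in> Dop" "a = rcompD x" "rcompD x \<in> DopN 0" by blast
      obtain N where "x \<in> DopN N" using x(1) Dop_eq by blast
      then have "x = 0" using rcompD_inj0 x(3) by blast
      then show "a \<in> {0}" using x by simp
    qed
    show "{0} \<subseteq> DopN 0 \<inter> rcompD ` Dop" using DopN_zero Dop_zero by (auto intro: image_eqI[of 0 _ 0])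
  qed
  show "Dop = {a + b |a b. a \<in> DopN 0 \<and> b \<in> rcompD ` Dop}"
  proof (intro set_eqI iffI)
    fix S assume "S \<in> Dop"
    then obtain N where "S \<in> DopN N" using Dop_eq by blast
    then obtain T where T: "T \<in> DopN N" "S - rcompD T \<in> DopN 0" using decomp_r by blast
    have "S = (S - rcompD T) + rcompD T" by simp
    then show "S \<in> {a + b |a b. a \<in> DopN 0 \<and> b \<in> rcompD ` Dop}" using T DopN_Dop by blast
  next
    fix S assume "S \<in> {a + b |a b. a \<in> DopN 0 \<and> b \<in> rcompD ` Dop}"
    then show "S \<in> Dop" by (auto intro: Dop_add Dop_rcompD DopN_Dop)
  qed
qed

lemma part5: "Kdirect 0 (1/2) Dop (Dop_le (1/2)) ((\<lambda>T. dbar_left (dbar_right T)) ` Dop)"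
  unfolding Kdirect_def Dop_le1 dbar_right_def dbar_left_def
proof (intro conjI)
  let ?f = "\<lambda>T. lcompD (rcompD T)"
  show "Ksub 0 (1/2) (DopN 1)" by (rule KsubDopN)
  show "Ksub 0 (1/2) (?f ` Dop)"
  proof (rule KsubI)
    show "0 \<in> ?f ` Dop" using Dop_zero by (intro image_eqI[of 0 _ 0]) simp_all
    fix a b assume "a \<in> ?f ` Dop" "b \<in> ?f ` Dop"
    then show "a + b \<in> ?f ` Dop" by (auto simp: rcompD_add[symmetric] lcompD_add[symmetric] intro: Dop_add)
  next
    fix c a assume "a \<in> ?f ` Dop"
    then show "sscale c a \<in> ?f ` Dop" by (auto simp: rcompD_sscale[symmetric] lcompD_sscale[symmetric] intro: Dop_sscale)
  next
    fix F a assume "a \<in> ?f ` Dop"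
    then obtain x where x: "x \<in> Dop" "a = ?f x" by blast
    have "act 0 (1/2) F a = lcompD (rcompD (act (1/2) 0 (sp_sigma F) x))"
      unfolding x act_lcompD act_rcompD ..
    then show "act 0 (1/2) F a \<in> ?f ` Dop" using Dop_act[OF x(1)] by blast
  qed
  show "DopN 1 \<inter> ?f ` Dop = {0}"
  proof
    show "DopN 1 \<inter> ?f ` Dop \<subseteq> {0}"
    proof
      fix a assume "a \<in> DopN 1 \<inter> ?f ` Dop"
      then obtain x where x: "x \<in> Dop" "a = ?f x" "lcompD (rcompD x) \<in> DopN (Suc 0)" by auto
      obtain N where N: "x \<in> DopN N" using x(1) Dop_eq by blast
      then have "rcompD x \<in> DopN 0" using lcompD_le[OF DopN_rcompD[OF N] x(3)] by blast
      then have "x = 0" using rcompD_inj0 N by blast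
      then show "a \<in> {0}" using x by simp
    qed
    show "{0} \<subseteq> DopN 1 \<inter> ?f ` Dop" using DopN_zero Dop_zero by (auto intro: image_eqI[of 0 _ 0])
  qed
  show "Dop = {a + b |a b. a \<in> DopN 1 \<and> b \<in> ?f ` Dop}"
  proof (intro set_eqI iffI)
    fix S assume "S \<in> Dop"
    then obtain N where "S \<in> DopN N" using Dop_eq by blast
    then obtain T1 where T1: "T1 \<in> DopN N" "S - lcompD T1 \<in> DopN 0" using decomp_l by blast
    then obtain T2 where T2: "T2 \<in> DopN N" "T1 - rcompD T2 \<in> DopN 0" using decomp_r by blast
    have l: "lcompD (T1 - rcompD T2) \<in> DopN 1" using DopN_lcompD[OF T2(2)] by simp
    have a: "(S - lcompD T1) + lcompD (T1 - rcompD T2) \<in> DopN 1"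
      by (intro DopN_add DopN_mono[OF T1(2)] l) simp
    have "S = ((S - lcompD T1) + lcompD (T1 - rcompD T2)) + ?f T2" by (simp add: lcompD_diff)
    then show "S \<in> {a + b |a b. a \<in> DopN 1 \<and> b \<in> ?f ` Dop}" using a T2(1) DopN_Dop by blast
  next
    fix S assume "S \<in> {a + b |a b. a \<in> DopN 1 \<and> b \<in> ?f ` Dop}"
    then show "S \<in> Dop" by (auto intro: Dop_add Dop_rcompD Dop_lcompD DopN_Dop)
  qed
qed



lemma cx1: "(-1 + 1/2 :: complex) = -1/2" "(2 * (-1) + 1 :: complex) = -1"
  "(-3/2 + 1/2 :: complex) = -1" "(2 * (-3/2) + 1 :: complex) = -2" "(-1/2 + 1/2 :: complex) = 0"
  by simp_all

lemma Psi_m1: "X \<in> Psi (-1/2) True \<Longrightarrow> X (-1) True = 0 \<Longrightarrow> X \<in> Psi (-1) False"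
  using Psi_drop[of X "-1" False] by (simp only: cx1 not_False_eq_True)
lemma Psi_m3: "X \<in> Psi (-1) False \<Longrightarrow> X (-2) False = 0 \<Longrightarrow> X \<in> Psi (-3/2) True"
  using Psi_drop[of X "-3/2" True] by (simp only: cx1 not_True_eq_False)
lemma Psi_m1_up: "X \<in> Psi (-1) False \<Longrightarrow> X \<in> Psi (-1/2) True"
  using Psi_up[of X "-1" False] by (simp only: cx1 not_False_eq_True)
lemma Psi_m3_up: "X \<in> Psi (-3/2) True \<Longrightarrow> X \<in> Psi (-1) False"
  using Psi_up[of X "-3/2" True] by (simp only: cx1 not_True_eq_False)
lemma Psi_h_up: "X \<in> Psi (-1/2) True \<Longrightarrow> X \<in> Psi 0 False"
  using Psi_up[of X "-1/2" True] by (simp only: cx1 not_True_eq_False)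
lemma Psi_m3_rcompD: "X \<in> Psi (-3/2) True \<Longrightarrow> rcompD X \<in> Psi (-1) False"
  using Psi_rcompD[of X "-3/2" True] by (simp only: cx1 not_True_eq_False)

lemma lcompD_act_sig: "lcompD (act lam 0 F T) = act lam (1/2) (sp_sigma F) (lcompD T)"
  using act_lcompD[of lam "sp_sigma F" T] by simp

lemma Psi_sum_closed: "Psi (-1) False \<subseteq> Psi (-1/2) True" using Psi_m1_up by blast

lemma part2: "Kdirect lam 0 (Psi (-1/2) True) (Psi (-1) False) {T \<in> Psi (-1/2) True. dbar_left T \<in> Dop_le 0}"
  unfolding Kdirect_def Dop_le0 dbar_left_def
proof (intro conjI)
  let ?B = "{T \<in> Psi (-1/2) True. lcompD T \<in> DopN 0}"
  show "Ksub lam 0 (Psi (-1) False)" by (rule KsubPsi)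
  show "Ksub lam 0 ?B"
  proof (rule KsubI)
    show "0 \<in> ?B" by (simp add: Psi_zero DopN_zero)
    fix a b assume "a \<in> ?B" "b \<in> ?B"
    then show "a + b \<in> ?B" by (simp add: Psi_add lcompD_add DopN_add)
  next
    fix c a assume "a \<in> ?B"
    then show "sscale c a \<in> ?B" by (simp add: Psi_sscale lcompD_sscale DopN_sscale)
  next
    fix F a assume "a \<in> ?B"
    then show "act lam 0 F a \<in> ?B" by (simp add: Psi_act lcompD_act_sig DopN_act)
  qed
  show "Psi (-1) False \<inter> ?B = {0}"
  proof
    show "Psi (-1) False \<inter> ?B \<subseteq> {0}" using low_zero by blast
    show "{0} \<subseteq> Psi (-1) False \<inter> ?B" by (simp add: Psi_zero DopN_zero)
  qed
  show "Psi (-1/2) True = {a + b |a b. a \<in> Psi (-1) False \<and> b \<in> ?B}"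
  proof (intro set_eqI iffI)
    fix S assume S: "S \<in> Psi (-1/2) True"
    define b where "b = Bsym (S (-1) True)"
    have b: "b \<in> ?B" unfolding b_def using Bsym_Psi Bsym_l by blast
    have a: "S - b \<in> Psi (-1) False"
      unfolding b_def by (rule Psi_m1[OF Psi_diff[OF S Bsym_Psi]]) (simp add: Bsym_top)
    have "S = (S - b) + b" by simp
    then show "S \<in> {a + b |a b. a \<in> Psi (-1) False \<and> b \<in> ?B}" using a b by blast
  next
    fix S assume "S \<in> {a + b |a b. a \<in> Psi (-1) False \<and> b \<in> ?B}"
    then obtain a b where ab: "S = a + b" "a \<in> Psi (-1) False" "b \<in> ?B" by blast
    show "S \<in> Psi (-1/2) True" unfolding ab(1) using Psi_add[OF Psi_m1_up[OF ab(2)]] ab(3) by blast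
  qed
qed

lemma part4: "Kdirect (1/2) mu (Psi (-1/2) True) (Psi (-1) False) {T \<in> Psi (-1/2) True. dbar_right T \<in> Dop_le 0}"
  unfolding Kdirect_def Dop_le0 dbar_right_def
proof (intro conjI)
  let ?B = "{T \<in> Psi (-1/2) True. rcompD T \<in> DopN 0}"
  show "Ksub (1/2) mu (Psi (-1) False)" by (rule KsubPsi)
  show "Ksub (1/2) mu ?B"
  proof (rule KsubI)
    show "0 \<in> ?B" by (simp add: Psi_zero DopN_zero)
    fix a b assume "a \<in> ?B" "b \<in> ?B"
    then show "a + b \<in> ?B" by (simp add: Psi_add rcompD_add DopN_add)
  next
    fix c a assume "a \<in> ?B"
    then show "sscale c a \<in> ?B" by (simp add: Psi_sscale rcompD_sscale DopN_sscale)
  next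
    fix F a assume "a \<in> ?B"
    then show "act (1/2) mu F a \<in> ?B" by (simp add: Psi_act act_rcompD[symmetric] DopN_act)
  qed
  show "Psi (-1) False \<inter> ?B = {0}"
  proof
    show "Psi (-1) False \<inter> ?B \<subseteq> {0}"
    proof
      fix T assume T: "T \<in> Psi (-1) False \<inter> ?B"
      have "T = 0"
      proof (intro ext)
        fix z q show "T z q = 0 z q"
        proof (rule ccontr)
          assume nz: "T z q \<noteq> 0 z q"
          then have "rcompD T (z + 1) (\<not> q) \<noteq> 0" by simp
          then obtain i where "i \<le> (0::nat)" "z + 1 = of_nat i" using DopND[of "rcompD T" 0] T by blast
          then have z: "z = -1" by (simp add: eq_neg_iff_add_eq_0)
          obtain j where "z = 2 * (-1) - of_nat j" using PsiD[of T "-1" False z q] T nz by auto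
          then have "of_nat (Suc j) = (0::complex)" using z by (simp add: algebra_simps)
          then show False by (simp only: of_nat_eq_0_iff)
        qed
      qed
      then show "T \<in> {0}" by simp
    qed
    show "{0} \<subseteq> Psi (-1) False \<inter> ?B" by (simp add: Psi_zero DopN_zero)
  qed
  show "Psi (-1/2) True = {a + b |a b. a \<in> Psi (-1) False \<and> b \<in> ?B}"
  proof (intro set_eqI iffI)
    fix S assume S: "S \<in> Psi (-1/2) True"
    define b where "b = (\<lambda>(z::complex) q. if z = -1 \<and> q then S (-1) True else 0)"
    have bP: "b \<in> Psi (-1/2) True"
      by (rule PsiI) (auto simp: b_def split: if_splits intro: exI[of _ 0])
    have bR: "rcompD b \<in> DopN 0"
      by (rule DopNI) (auto simp: b_def split: if_splits)
    have a: "S - b \<in> Psi (-1) False"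
      by (rule Psi_m1[OF Psi_diff[OF S bP]]) (simp add: b_def)
    have "S = (S - b) + b" by simp
    then show "S \<in> {a + b |a b. a \<in> Psi (-1) False \<and> b \<in> ?B}" using a bP bR by blast
  next
    fix S assume "S \<in> {a + b |a b. a \<in> Psi (-1) False \<and> b \<in> ?B}"
    then obtain a b where ab: "S = a + b" "a \<in> Psi (-1) False" "b \<in> ?B" by blast
    show "S \<in> Psi (-1/2) True" unfolding ab(1) using Psi_add[OF Psi_m1_up[OF ab(2)]] ab(3) by blast
  qed
qed



lemma lr_act: "lcompD (rcompD (act (1/2) 0 F T)) = act 0 (1/2) (sp_sigma F) (lcompD (rcompD T))"
  by (simp add: act_rcompD[symmetric] lcompD_act_sig)

lemma part6: "Kdirect (1/2) 0 (Psi (-1/2) True) (Psi (-3/2) True)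
           {T \<in> Psi (-1/2) True. dbar_left (dbar_right T) \<in> Dop_le (1/2)}"
  unfolding Kdirect_def Dop_le1 dbar_left_def dbar_right_def
proof (intro conjI)
  let ?B = "{T \<in> Psi (-1/2) True. lcompD (rcompD T) \<in> DopN 1}"
  show "Ksub (1/2) 0 (Psi (-3/2) True)" by (rule KsubPsi)
  show "Ksub (1/2) 0 ?B"
  proof (rule KsubI)
    show "0 \<in> ?B" by (simp add: Psi_zero DopN_zero)
    fix a b assume "a \<in> ?B" "b \<in> ?B"
    then show "a + b \<in> ?B" by (simp add: Psi_add rcompD_add lcompD_add DopN_add)
  next
    fix c a assume "a \<in> ?B"
    then show "sscale c a \<in> ?B" by (simp add: Psi_sscale rcompD_sscale lcompD_sscale DopN_sscale)
  next
    fix F a assume "a \<in> ?B"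
    then show "act (1/2) 0 F a \<in> ?B" by (simp add: Psi_act lr_act DopN_act)
  qed
  show "Psi (-3/2) True \<inter> ?B = {0}"
  proof
    show "Psi (-3/2) True \<inter> ?B \<subseteq> {0}"
    proof
      fix T assume T: "T \<in> Psi (-3/2) True \<inter> ?B"
      have "rcompD T = 0" by (rule low_zero[OF Psi_m3_rcompD]) (use T in auto)
      have "T = 0"
      proof (intro ext)
        fix z q
        have "T z q = rcompD T (z + 1) (\<not> q)" by simp
        then show "T z q = 0 z q" using \<open>rcompD T = 0\<close> by simp
      qed
      then show "T \<in> {0}" by simp
    qed
    show "{0} \<subseteq> Psi (-3/2) True \<inter> ?B" by (simp add: Psi_zero DopN_zero)
  qed
  show "Psi (-1/2) True = {a + b |a b. a \<in> Psi (-3/2) True \<and> b \<in> ?B}"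
  proof (intro set_eqI iffI)
    fix S assume S: "S \<in> Psi (-1/2) True"
    define s0 where "s0 = S (-1) True"
    define s1 where "s1 = S (-2) False"
    define d where "d = (\<lambda>(z::complex) q. if z = 0 \<and> \<not> q then s0 else 0)"
    define U where "U = Bsym s1 + d"
    define b where "b = (\<lambda>z q. U (z + 1) (\<not> q))"
    have dD: "d \<in> DopN 0" by (rule DopNI) (auto simp: d_def split: if_splits)
    have dP: "d \<in> Psi 0 False" by (rule PsiI) (auto simp: d_def split: if_splits)
    have UP: "U \<in> Psi 0 False" unfolding U_def by (intro Psi_add Psi_h_up Bsym_Psi dP)
    have rb: "rcompD b = U" unfolding b_def by (intro ext) simp
    have ld: "lcompD d \<in> DopN 1" using DopN_lcompD[OF dD] by simp
    have lU: "lcompD U \<in> DopN 1" unfolding U_def lcompD_add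
      by (intro DopN_add DopN_mono[OF Bsym_l] ld) simp
    have bP: "b \<in> Psi (-1/2) True"
    proof (rule PsiI)
      fix z q assume "b z q \<noteq> 0"
      then have "U (z + 1) (\<not> q) \<noteq> 0" by (simp add: b_def)
      then obtain j where j: "z + 1 = 2 * 0 - of_nat j" "(\<not> q) = (False \<noteq> odd j)" using PsiD[OF UP] by blast
      have "z = (z + 1) - 1" by simp
      also have "\<dots> = 2 * (-1/2) - of_nat j" unfolding j(1) by simp
      finally show "\<exists>j::nat. z = 2 * (-1/2) - of_nat j \<and> q = (True \<noteq> odd j)" using j(2) by auto
    qed
    have B0: "Bsym s1 0 False = 0"
    proof (rule Bsym_off)
      show "\<not> (\<exists>j::nat. (0::complex) = -1 - of_nat j \<and> False = even j)"
        using nat_neg_eq[of 0] by auto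
    qed
    have B1: "Bsym s1 (-2) True = 0"
    proof (rule Bsym_off)
      show "\<not> (\<exists>j::nat. (-2::complex) = -1 - of_nat j \<and> True = even j)"
      proof
        assume "\<exists>j::nat. (-2::complex) = -1 - of_nat j \<and> True = even j"
        then obtain j :: nat where "(-2::complex) = -1 - of_nat j" "even j" by blast
        then have "of_nat j = (of_nat 1 :: complex)" by (simp add: algebra_simps)
        then have "j = 1" by (simp only: of_nat_eq_iff)
        then show False using \<open>even j\<close> by simp
      qed
    qed
    have a1: "S - b \<in> Psi (-1) False"
      by (rule Psi_m1[OF Psi_diff[OF S bP]]) (simp add: b_def U_def d_def s0_def B0)
    have a: "S - b \<in> Psi (-3/2) True"
      by (rule Psi_m3[OF a1]) (simp add: b_def U_def d_def s1_def Bsym_top)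
    have bB: "b \<in> ?B" using bP lU rb by simp
    have "S = (S - b) + b" by simp
    then show "S \<in> {a + b |a b. a \<in> Psi (-3/2) True \<and> b \<in> ?B}" using a bB by blast
  next
    fix S assume "S \<in> {a + b |a b. a \<in> Psi (-3/2) True \<and> b \<in> ?B}"
    then obtain a b where ab: "S = a + b" "a \<in> Psi (-3/2) True" "b \<in> ?B" by blast
    show "S \<in> Psi (-1/2) True" unfolding ab(1) using Psi_add[OF Psi_m1_up[OF Psi_m3_up[OF ab(2)]]] ab(3) by blast
  qed
qed

theorem lemma3p5:
  fixes lam mu :: complex
  shows "Kdirect lam (1/2) Dop (Dop_le 0) (dbar_left ` Dop) \<and>
    Kdirect lam 0 (Psi (-1/2) True) (Psi (-1) False)
           {T \<in> Psi (-1/2) True. dbar_left T \<in> Dop_le 0} \<and>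
    Kdirect 0 mu Dop (Dop_le 0) (dbar_right ` Dop) \<and>
    Kdirect (1/2) mu (Psi (-1/2) True) (Psi (-1) False)
           {T \<in> Psi (-1/2) True. dbar_right T \<in> Dop_le 0} \<and>
    Kdirect 0 (1/2) Dop (Dop_le (1/2)) ((\<lambda>T. dbar_left (dbar_right T)) ` Dop) \<and>
    Kdirect (1/2) 0 (Psi (-1/2) True) (Psi (-3/2) True)
           {T \<in> Psi (-1/2) True. dbar_left (dbar_right T) \<in> Dop_le (1/2)}"
  using part1 part2 part3 part4 part5 part6 by blast


end
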